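(* Let $\Gamma$ be a countably infinite group acting minimally and continuously on a compact metrizable space $X$ such that $X$ consists of more than one $\Gamma$-orbit. Let $x_1\in X$ have trivial stabilizer, and let $f:X\setminus\{x_1\}\to\{1,-1\}$ be continuous and not extendable to a continuous function on $X$. Let $\Gamma\curvearrowright X_f$ and $\pi_f:X_f\to X$ be the associated McMahon extension. Set $X_+=f^{-1}(1)$ and $X_-=f^{-1}(-1)$. Then $\Gamma\curvearrowright X_f$ is null if and only if $\Gamma\curvearrowright X$ is null and the pair $(X_+,X_-)$ does not have arbitrarily large finite independence sets.
   Context: McMahon extension: there is a minimal continuous action $\Gamma\curvearrowright X_f$ on a compact metrizable space with a $\Gamma$-equivariant continuous surjection $\pi_f:X_f\to X$ such that $\pi_f^{-1}(x)$ is one point for $x\notin\Gamma x_1$ and two points for $x\in\Gamma x_1$, and $f\circ\pi_f$ on $X_f\setminus\pi_f^{-1}(x_1)$ extends to a continuous $\tilde f:X_f\to\{1,-1\}$; it is unique up to conjugacy as an extension of $X$. Concretely: pick $x_0\in X\setminus\Gamma x_1$, let $W$ be the Stone–Čech compactification of $\Gamma x_0$ (with topology from $X$), $\pi_W:W\to X$ the extension of the inclusion, $f_W$ the continuous extension of $f\circ\pi_W|_{\Gamma x_0}$ to $W$; define $w_1\sim w_2$ iff $\pi_W(w_1)=\pi_W(w_2)$ and $f_W(sw_1)=f_W(sw_2)$ for all $s\in\Gamma$; then $X_f=W/\!\sim$. For subsets $A_1,A_2\subseteq X$, a set $M\subseteq\Gamma$ is an independence set for $(A_1,A_2)$ if $\bigcap_{s\in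 F}s^{-1}A_{\omega(s)}\neq\emptyset$ for every nonempty finite $F\subseteq M$ and every $\omega\in\{1,2\}^F$. Null: for every sequence $\mathfrak s=\{s_n\}$ in $\Gamma$ and finite open cover $\mathcal U$, $\limsup_n\frac1n\log N(\bigvee_{i=1}^n s_i^{-1}\mathcal U)=0$, $N$ the minimal size of a subcover. *)

theory Defs
  imports "HOL-Analysis.Analysis" "HOL-Algebra.Group"
begin

definition cont_action :: "('g,'m) monoid_scheme \<Rightarrow> 'a topology \<Rightarrow> ('g \<Rightarrow> 'a \<Rightarrow> 'a) \<Rightarrow> bool" where
  "cont_action G X act \<longleftrightarrow>
     (\<forall>s\<in>carrier G. continuous_map X X (act s)) \<and>
     (\<forall>x\<in>topspace X. act \<one>\<^bsub>G\<^esub> x = x) \<and>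
     (\<forall>s\<in>carrier G. \<forall>t\<in>carrier G. \<forall>x\<in>topspace X. act (s \<otimes>\<^bsub>G\<^esub> t) x = act s (act t x))"

definition orbit_of :: "('g,'m) monoid_scheme \<Rightarrow> ('g \<Rightarrow> 'a \<Rightarrow> 'a) \<Rightarrow> 'a \<Rightarrow> 'a set" where
  "orbit_of G act x = (\<lambda>s. act s x) ` carrier G"

definition minimal_action :: "('g,'m) monoid_scheme \<Rightarrow> 'a topology \<Rightarrow> ('g \<Rightarrow> 'a \<Rightarrow> 'a) \<Rightarrow> bool" where
  "minimal_action G X act \<longleftrightarrow> topspace X \<noteq> {} \<and>
     (\<forall>A. closedin X A \<and> A \<noteq> {} \<and> (\<forall>s\<in>carrier G. \<forall>x\<in>A. act s x \<in> A) \<longrightarrow> A = topspace X)"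

definition preimg :: "'a topology \<Rightarrow> ('g \<Rightarrow> 'a \<Rightarrow> 'a) \<Rightarrow> 'g \<Rightarrow> 'a set \<Rightarrow> 'a set" where
  "preimg X act s A = {x \<in> topspace X. act s x \<in> A}"

definition join_cover :: "'a topology \<Rightarrow> ('g \<Rightarrow> 'a \<Rightarrow> 'a) \<Rightarrow> (nat \<Rightarrow> 'g) \<Rightarrow> 'a set set \<Rightarrow> nat \<Rightarrow> 'a set set" where
  "join_cover X act s U n =
     {topspace X \<inter> (\<Inter>i\<in>{1..n}. preimg X act (s i) (W i)) | W. \<forall>i\<in>{1..n}. W i \<in> U}"

definition cover_number :: "'a topology \<Rightarrow> 'a set set \<Rightarrow> nat" where
  "cover_number X U = (LEAST k. \<exists>V\<subseteq>U. finite V \<and> card V = k \<and> topspace X \<subseteq> \<Union>V)"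

definition null_action :: "('g,'m) monoid_scheme \<Rightarrow> 'a topology \<Rightarrow> ('g \<Rightarrow> 'a \<Rightarrow> 'a) \<Rightarrow> bool" where
  "null_action G X act \<longleftrightarrow>
     (\<forall>s U. (\<forall>n. s n \<in> carrier G) \<and> finite U \<and> (\<forall>W\<in>U. openin X W) \<and> topspace X \<subseteq> \<Union>U \<longrightarrow>
        limsup (\<lambda>n. ereal (ln (real (cover_number X (join_cover X act s U n))) / real n)) = 0)"

definition indep_set :: "('g,'m) monoid_scheme \<Rightarrow> 'a topology \<Rightarrow> ('g \<Rightarrow> 'a \<Rightarrow> 'a) \<Rightarrow> 'a set \<Rightarrow> 'a set \<Rightarrow> 'g set \<Rightarrow> bool" where
  "indep_set G X act A1 A2 M \<longleftrightarrow> M \<subseteq> carrier G \<and>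
     (\<forall>F (\<omega>::'g \<Rightarrow> bool). F \<subseteq> M \<and> finite F \<and> F \<noteq> {} \<longrightarrow>
        (\<Inter>s\<in>F. preimg X act s (if \<omega> s then A1 else A2)) \<noteq> {})"

definition arb_large_indep :: "('g,'m) monoid_scheme \<Rightarrow> 'a topology \<Rightarrow> ('g \<Rightarrow> 'a \<Rightarrow> 'a) \<Rightarrow> 'a set \<Rightarrow> 'a set \<Rightarrow> bool" where
  "arb_large_indep G X act A1 A2 \<longleftrightarrow>
     (\<forall>k::nat. \<exists>M. finite M \<and> k \<le> card M \<and> indep_set G X act A1 A2 M)"

text \<open>(Y, actY, p) is the McMahon extension of (X, act) with respect to x1 and f, characterised
  (uniquely up to conjugacy) by the properties listed in the paper.\<close>
definition mcmahon_extension ::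
  "('g,'m) monoid_scheme \<Rightarrow> 'a topology \<Rightarrow> ('g \<Rightarrow> 'a \<Rightarrow> 'a) \<Rightarrow> 'a \<Rightarrow> ('a \<Rightarrow> real)
   \<Rightarrow> 'b topology \<Rightarrow> ('g \<Rightarrow> 'b \<Rightarrow> 'b) \<Rightarrow> ('b \<Rightarrow> 'a) \<Rightarrow> bool" where
  "mcmahon_extension G X act x1 f Y actY p \<longleftrightarrow>
     compact_space Y \<and> metrizable_space Y \<and> cont_action G Y actY \<and> minimal_action G Y actY \<and>
     continuous_map Y X p \<and> p ` topspace Y = topspace X \<and>
     (\<forall>s\<in>carrier G. \<forall>y\<in>topspace Y. p (actY s y) = act s (p y)) \<and>
     (\<forall>x\<in>topspace X - orbit_of G act x1. \<exists>!y. y \<in> topspace Y \<and> p y = x) \<and>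
     (\<forall>x\<in>topspace X \<inter> orbit_of G act x1. \<exists>y1 y2. y1 \<noteq> y2 \<and> {y\<in>topspace Y. p y = x} = {y1, y2}) \<and>
     (\<exists>ft. continuous_map Y euclideanreal ft \<and> ft ` topspace Y \<subseteq> {1, -1} \<and>
          (\<forall>y\<in>topspace Y. p y \<noteq> x1 \<longrightarrow> ft y = f (p y)))"

end

theory Submission
  imports Defs "HOL-Real_Asymp.Real_Asymp"
begin

definition shat :: "'x set set \<Rightarrow> 'x set \<Rightarrow> 'x set set" where
  "shat P S = {F. F \<subseteq> S \<and> (\<forall>F'\<subseteq>F. \<exists>\<pi>\<in>P. \<pi> \<inter> F = F')}"

lemma finite_shat: "finite S \<Longrightarrow> finite (shat P S)"
  unfolding shat_def by (rule finite_subset[of _ "Pow S"]) auto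

lemma shatI: "F \<subseteq> S \<Longrightarrow> (\<And>F'. F' \<subseteq> F \<Longrightarrow> \<exists>\<pi>\<in>P. \<pi> \<inter> F = F') \<Longrightarrow> F \<in> shat P S"
  unfolding shat_def by blast
lemma shatD: "F \<in> shat P S \<Longrightarrow> F' \<subseteq> F \<Longrightarrow> \<exists>\<pi>\<in>P. \<pi> \<inter> F = F'"
  unfolding shat_def by blast
lemma shatS: "F \<in> shat P S \<Longrightarrow> F \<subseteq> S"
  unfolding shat_def by blast

lemma pajor: "finite S \<Longrightarrow> P \<subseteq> Pow S \<Longrightarrow> card P \<le> card (shat P S)"
proof (induction S arbitrary: P rule: finite_induct)
  case empty
  then have "P \<subseteq> {{}}" by auto
  then show ?case
  proof (cases "P = {}")
    case False
    then have "P = {{}}" using \<open>P \<subseteq> {{}}\<close> by auto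
    moreover have "shat P {} = {{}}" unfolding shat_def using \<open>P = {{}}\<close> by auto
    ultimately show ?thesis by simp
  qed simp
next
  case (insert x S)
  define A where "A = {\<pi>\<in>P. x \<notin> \<pi>}"
  define B where "B = {\<pi>\<in>P. x \<in> \<pi>}"
  define P0 where "P0 = (\<lambda>\<pi>. \<pi> - {x}) ` P"
  define P1 where "P1 = {\<sigma>\<in>P. x \<notin> \<sigma> \<and> insert x \<sigma> \<in> P}"
  have finP: "finite P" using insert.prems insert.hyps(1)
    by (meson finite_Pow_iff finite_insert finite_subset)
  have P0S: "P0 \<subseteq> Pow S" using insert.prems unfolding P0_def by auto
  have P1S: "P1 \<subseteq> Pow S" using insert.prems unfolding P1_def by auto
  have PAB: "P = A \<union> B" "A \<inter> B = {}" unfolding A_def B_def by auto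
  have cP: "card P = card A + card B"
    using PAB finP by (metis card_Un_disjoint finite_Un)
  have P0eq: "P0 = A \<union> (\<lambda>\<pi>. \<pi> - {x}) ` B"
  proof -
    have "P0 = (\<lambda>\<pi>. \<pi> - {x}) ` A \<union> (\<lambda>\<pi>. \<pi> - {x}) ` B" unfolding P0_def PAB(1) by (rule image_Un)
    moreover have "(\<lambda>\<pi>. \<pi> - {x}) ` A = A" unfolding A_def by (auto simp: image_def)
    ultimately show ?thesis by simp
  qed
  have injB: "inj_on (\<lambda>\<pi>. \<pi> - {x}) B" unfolding B_def inj_on_def by (metis (mono_tags, lifting) insert_Diff mem_Collect_eq)
  have AB1: "A \<inter> (\<lambda>\<pi>. \<pi> - {x}) ` B = P1"
  proof (rule Set.set_eqI)
    fix \<sigma>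
    show "\<sigma> \<in> A \<inter> (\<lambda>\<pi>. \<pi> - {x}) ` B \<longleftrightarrow> \<sigma> \<in> P1"
    proof
      assume "\<sigma> \<in> A \<inter> (\<lambda>\<pi>. \<pi> - {x}) ` B"
      then obtain \<pi> where "\<sigma> \<in> P" "x \<notin> \<sigma>" "\<pi> \<in> P" "x \<in> \<pi>" "\<sigma> = \<pi> - {x}"
        unfolding A_def B_def by auto
      then have "insert x \<sigma> = \<pi>" by auto
      then show "\<sigma> \<in> P1" unfolding P1_def using \<open>\<sigma> \<in> P\<close> \<open>x \<notin> \<sigma>\<close> \<open>\<pi> \<in> P\<close> by auto
    next
      assume "\<sigma> \<in> P1"
      then have "\<sigma> \<in> P" "x \<notin> \<sigma>" "insert x \<sigma> \<in> P" unfolding P1_def by auto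
      then show "\<sigma> \<in> A \<inter> (\<lambda>\<pi>. \<pi> - {x}) ` B" unfolding A_def B_def
        by (auto intro!: image_eqI[of _ _ "insert x \<sigma>"])
    qed
  qed
  have finA: "finite A" and finB: "finite B" using finP PAB by auto
  have "card P0 + card P1 = card A + card B"
    using card_Un_Int[of A "(\<lambda>\<pi>. \<pi> - {x}) ` B"] finA finB P0eq AB1 card_image[OF injB] by simp
  then have cP': "card P = card P0 + card P1" using cP by simp
  have IH0: "card P0 \<le> card (shat P0 S)" using insert.IH P0S by blast
  have IH1: "card P1 \<le> card (shat P1 S)" using insert.IH P1S by blast
  have sub0: "shat P0 S \<subseteq> shat P (insert x S)"
  proof
    fix F assume F: "F \<in> shat P0 S"
    have xF: "x \<notin> F" using shatS[OF F] insert.hyps(2) by blast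
    show "F \<in> shat P (insert x S)"
    proof (rule shatI)
      show "F \<subseteq> insert x S" using shatS[OF F] by blast
    next
      fix F' assume "F' \<subseteq> F"
      then obtain \<sigma> where s: "\<sigma> \<in> P0" "\<sigma> \<inter> F = F'" using shatD[OF F] by blast
      then obtain \<pi> where p: "\<pi> \<in> P" "\<sigma> = \<pi> - {x}" unfolding P0_def by blast
      have "\<pi> \<inter> F = F'" using s p xF by blast
      then show "\<exists>\<pi>\<in>P. \<pi> \<inter> F = F'" using p by blast
    qed
  qed
  have sub1: "insert x ` shat P1 S \<subseteq> shat P (insert x S)"
  proof
    fix G assume "G \<in> insert x ` shat P1 S"
    then obtain F where F: "F \<in> shat P1 S" and G: "G = insert x F" by blast
    have xF: "x \<notin> F" using shatS[OF F] insert.hyps(2) by blast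
    show "G \<in> shat P (insert x S)" unfolding G
    proof (rule shatI)
      show "insert x F \<subseteq> insert x S" using shatS[OF F] by blast
    next
      fix F' assume F': "F' \<subseteq> insert x F"
      then have "F' - {x} \<subseteq> F" by blast
      then obtain \<sigma> where s: "\<sigma> \<in> P1" "\<sigma> \<inter> F = F' - {x}" using shatD[OF F] by blast
      then have s2: "\<sigma> \<in> P" "x \<notin> \<sigma>" "insert x \<sigma> \<in> P" unfolding P1_def by auto
      show "\<exists>\<pi>\<in>P. \<pi> \<inter> insert x F = F'"
      proof (cases "x \<in> F'")
        case True
        have "insert x \<sigma> \<inter> insert x F = F'" using s(2) True by blast
        then show ?thesis using s2 by blast
      next
        case False
        have "\<sigma> \<inter> insert x F = F'" using s(2) s2(2) False by blast
        then show ?thesis using s2 by blast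
      qed
    qed
  qed
  have disj: "shat P0 S \<inter> insert x ` shat P1 S = {}"
    using insert.hyps(2) shatS by blast
  have injx: "inj_on (insert x) (shat P1 S)"
  proof (rule inj_onI)
    fix F1 F2 assume "F1 \<in> shat P1 S" "F2 \<in> shat P1 S" "insert x F1 = insert x F2"
    moreover have "x \<notin> F1" "x \<notin> F2" using calculation(1,2) shatS insert.hyps(2) by blast+
    ultimately show "F1 = F2" by (metis Diff_insert_absorb)
  qed
  have "card (shat P0 S) + card (shat P1 S) = card (shat P0 S \<union> insert x ` shat P1 S)"
    using card_Un_disjoint[OF finite_shat[OF insert.hyps(1)] finite_imageI[OF finite_shat[OF insert.hyps(1)]] disj]
      card_image[OF injx] by simp
  also have "\<dots> \<le> card (shat P (insert x S))"
    using sub0 sub1 by (intro card_mono finite_shat) (auto simp: insert.hyps)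
  finally show ?case using cP' IH0 IH1 by linarith
qed

lemma card_small_subsets:
  assumes "finite S"
  shows "card {F. F \<subseteq> S \<and> card F < d} \<le> (d+1) * (card S + 1) ^ d"
proof -
  have "{F. F \<subseteq> S \<and> card F < d} \<subseteq> set ` {xs. set xs \<subseteq> S \<and> length xs \<le> d}"
  proof
    fix F assume F: "F \<in> {F. F \<subseteq> S \<and> card F < d}"
    then have "finite F" using assms finite_subset by auto
    then obtain xs where "set xs = F" "distinct xs" using finite_distinct_list by blast
    then show "F \<in> set ` {xs. set xs \<subseteq> S \<and> length xs \<le> d}"
      using F distinct_card[of xs] by (intro image_eqI[of _ _ xs]) auto
  qed
  then have "card {F. F \<subseteq> S \<and> card F < d} \<le> card (set ` {xs. set xs \<subseteq> S \<and> length xs \<le> d})"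
    by (intro card_mono finite_imageI finite_lists_length_le assms)
  also have "\<dots> \<le> card {xs. set xs \<subseteq> S \<and> length xs \<le> d}"
    by (intro card_image_le finite_lists_length_le assms)
  also have "\<dots> = (\<Sum>i\<le>d. card S ^ i)" by (rule card_lists_length_le[OF assms])
  also have "\<dots> \<le> (\<Sum>i\<le>d. (card S + 1) ^ d)"
    proof (intro sum_mono)
    fix i assume "i \<in> {..d}"
    then have "card S ^ i \<le> (card S + 1) ^ i" by (intro power_mono) auto
    also have "\<dots> \<le> (card S + 1) ^ d" using \<open>i \<in> {..d}\<close> by (intro power_increasing) auto
    finally show "card S ^ i \<le> (card S + 1) ^ d" .
  qed
  finally show ?thesis by simp
qed

lemma join_coverI: "(\<And>i. i \<in> {1..n} \<Longrightarrow> W i \<in> U) \<Longrightarrow>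
   topspace X \<inter> (\<Inter>i\<in>{1..n}. preimg X act (s i) (W i)) \<in> join_cover X act s U n"
  unfolding join_cover_def by blast

lemma join_coverE: assumes "v \<in> join_cover X act s U n"
  obtains W where "\<And>i. i \<in> {1..n} \<Longrightarrow> W i \<in> U" "v = topspace X \<inter> (\<Inter>i\<in>{1..n}. preimg X act (s i) (W i))"
  using assms unfolding join_cover_def by blast

lemma join_coverD: "v \<in> join_cover X act s U n \<Longrightarrow>
  \<exists>W. (\<forall>i\<in>{1..n}. W i \<in> U) \<and> v = topspace X \<inter> (\<Inter>i\<in>{1..n}. preimg X act (s i) (W i))"
  unfolding join_cover_def by blast

lemma join_cover_finite:
  assumes "finite U" shows "finite (join_cover X act s U n)"
proof -
  let ?h = "\<lambda>W. topspace X \<inter> (\<Inter>i\<in>{1..n}. preimg X act (s i) (W i))"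
  have "join_cover X act s U n \<subseteq> ?h ` (PiE {1..n} (\<lambda>_. U))"
  proof
    fix v assume "v \<in> join_cover X act s U n"
    then obtain W where W: "\<forall>i\<in>{1..n}. W i \<in> U" "v = ?h W" unfolding join_cover_def by blast
    show "v \<in> ?h ` (PiE {1..n} (\<lambda>_. U))"
    proof (rule image_eqI[of _ _ "restrict W {1..n}"])
      show "restrict W {1..n} \<in> PiE {1..n} (\<lambda>_. U)" using W(1) by simp
      show "v = ?h (restrict W {1..n})" using W(2) by simp
    qed
  qed
  moreover have "finite (?h ` (PiE {1..n} (\<lambda>_. U)))" using assms by (simp add: finite_PiE)
  ultimately show ?thesis by (rule finite_subset)
qed

lemma join_cover_covers:
  assumes "topspace X \<subseteq> \<Union>U" "\<And>i x. x \<in> topspace X \<Longrightarrow> act (s i) x \<in> topspace X"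
  shows "topspace X \<subseteq> \<Union>(join_cover X act s U n)"
proof
  fix x assume x: "x \<in> topspace X"
  define W where "W = (\<lambda>i. SOME u. u \<in> U \<and> act (s i) x \<in> u)"
  have W: "W i \<in> U \<and> act (s i) x \<in> W i" for i
    unfolding W_def by (rule someI_ex) (use assms x in blast)
  have "x \<in> topspace X \<inter> (\<Inter>i\<in>{1..n}. preimg X act (s i) (W i))"
    using x W unfolding preimg_def by auto
  moreover have "topspace X \<inter> (\<Inter>i\<in>{1..n}. preimg X act (s i) (W i)) \<in> join_cover X act s U n"
    by (rule join_coverI) (use W in blast)
  ultimately show "x \<in> \<Union>(join_cover X act s U n)" by blast
qed

lemma cn_le: "V \<subseteq> U \<Longrightarrow> finite V \<Longrightarrow> topspace X \<subseteq> \<Union>V \<Longrightarrow> cover_number X U \<le> card V"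
  unfolding cover_number_def by (rule Least_le) blast

lemma cn_ex: assumes "finite U" "topspace X \<subseteq> \<Union>U"
  shows "\<exists>V\<subseteq>U. finite V \<and> card V = cover_number X U \<and> topspace X \<subseteq> \<Union>V"
  unfolding cover_number_def by (rule LeastI_ex) (use assms in blast)

lemma cn_pos: assumes "topspace X \<noteq> {}" "finite U" "topspace X \<subseteq> \<Union>U"
  shows "1 \<le> cover_number X U"
proof -
  obtain V where V: "V \<subseteq> U" "finite V" "card V = cover_number X U" "topspace X \<subseteq> \<Union>V"
    using cn_ex[OF assms(2,3)] by blast
  then have "V \<noteq> {}" using assms(1) by auto
  then have "0 < card V" using V(2) by (simp add: card_gt_0_iff)
  then show ?thesis using V(3) by simp
qed

lemma limsup_ge0: "(\<And>n. 0 \<le> a n) \<Longrightarrow> 0 \<le> limsup (\<lambda>n. ereal (a n))"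
  by (rule le_Limsup) auto

lemma limsup_zero_le:
  assumes "\<And>n. 0 \<le> a n" "\<And>n. a n \<le> b n" "limsup (\<lambda>n. ereal (b n)) = 0"
  shows "limsup (\<lambda>n. ereal (a n)) = 0"
proof (rule antisym)
  have "limsup (\<lambda>n. ereal (a n)) \<le> limsup (\<lambda>n. ereal (b n))"
    by (rule Limsup_mono) (use assms(2) in auto)
  then show "limsup (\<lambda>n. ereal (a n)) \<le> 0" using assms(3) by simp
  show "0 \<le> limsup (\<lambda>n. ereal (a n))" by (rule limsup_ge0[OF assms(1)])
qed

lemma ln_ratio_nonneg: "1 \<le> N \<Longrightarrow> 0 \<le> ln (real N) / real n"
  by simp

locale mc = group G
  for G :: "('g,'m) monoid_scheme" (structure) +
  fixes X :: "'a topology" and act :: "'g \<Rightarrow> 'a \<Rightarrow> 'a"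
    and x1 :: 'a and f :: "'a \<Rightarrow> real"
    and Y :: "'b topology" and actY :: "'g \<Rightarrow> 'b \<Rightarrow> 'b" and p :: "'b \<Rightarrow> 'a"
    and ft :: "'b \<Rightarrow> real"
  assumes cX: "compact_space X" and hX: "Hausdorff_space X"
    and aX: "cont_action G X act"
    and aY: "cont_action G Y actY" and minY: "minimal_action G Y actY" and cY: "compact_space Y"
    and x1X: "x1 \<in> topspace X"
    and more0: "\<exists>x\<in>topspace X. \<exists>y\<in>topspace X. y \<notin> orbit_of G act x"
    and fcont: "continuous_map (subtopology X (topspace X - {x1})) euclideanreal f"
    and fval: "f ` (topspace X - {x1}) \<subseteq> {1, -1}"
    and noext: "\<not> (\<exists>g. continuous_map X euclideanreal g \<and> g ` topspace X \<subseteq> {1, -1} \<and>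
                (\<forall>x\<in>topspace X - {x1}. g x = f x))"
    and uniq: "\<forall>x\<in>topspace X - orbit_of G act x1. \<exists>!y. y \<in> topspace Y \<and> p y = x"
    and pc: "continuous_map Y X p" and psurj: "p ` topspace Y = topspace X"
    and peq: "\<forall>s\<in>carrier G. \<forall>y\<in>topspace Y. p (actY s y) = act s (p y)"
    and two: "\<forall>x\<in>topspace X \<inter> orbit_of G act x1. \<exists>y1 y2. y1 \<noteq> y2 \<and> {y\<in>topspace Y. p y = x} = {y1, y2}"
    and ftc: "continuous_map Y euclideanreal ft" and ftv: "ft ` topspace Y \<subseteq> {1, -1}"
    and ftf: "\<forall>y\<in>topspace Y. p y \<noteq> x1 \<longrightarrow> ft y = f (p y)"
begin

lemma actY_cont: "s \<in> carrier G \<Longrightarrow> continuous_map Y Y (actY s)"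
  using aY unfolding cont_action_def by blast
lemma act_cont: "s \<in> carrier G \<Longrightarrow> continuous_map X X (act s)"
  using aX unfolding cont_action_def by blast
lemma actY_in: "s \<in> carrier G \<Longrightarrow> y \<in> topspace Y \<Longrightarrow> actY s y \<in> topspace Y"
  using continuous_map_image_subset_topspace[OF actY_cont[of s]] by blast
lemma act_in: "s \<in> carrier G \<Longrightarrow> x \<in> topspace X \<Longrightarrow> act s x \<in> topspace X"
  using continuous_map_image_subset_topspace[OF act_cont[of s]] by blast
lemma actY_mult: "s \<in> carrier G \<Longrightarrow> t \<in> carrier G \<Longrightarrow> y \<in> topspace Y \<Longrightarrow> actY (s \<otimes> t) y = actY s (actY t y)"
  using aY unfolding cont_action_def by blast
lemma act_mult: "s \<in> carrier G \<Longrightarrow> t \<in> carrier G \<Longrightarrow> x \<in> topspace X \<Longrightarrow> act (s \<otimes> t) x = act s (act t x)"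
  using aX unfolding cont_action_def by blast
lemma actY_one: "y \<in> topspace Y \<Longrightarrow> actY \<one> y = y"
  using aY unfolding cont_action_def by blast
lemma act_one: "x \<in> topspace X \<Longrightarrow> act \<one> x = x"
  using aX unfolding cont_action_def by blast
lemma actY_inv: "s \<in> carrier G \<Longrightarrow> y \<in> topspace Y \<Longrightarrow> actY (inv s) (actY s y) = y"
proof -
  assume a: "s \<in> carrier G" "y \<in> topspace Y"
  have "actY (inv s) (actY s y) = actY (inv s \<otimes> s) y" using actY_mult[of "inv s" s y] a by simp
  also have "\<dots> = y" using a actY_one by simp
  finally show ?thesis .
qed
lemma act_inv: "s \<in> carrier G \<Longrightarrow> x \<in> topspace X \<Longrightarrow> act (inv s) (act s x) = x"
proof -
  assume a: "s \<in> carrier G" "x \<in> topspace X"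
  have "act (inv s) (act s x) = act (inv s \<otimes> s) x" using act_mult[of "inv s" s x] a by simp
  also have "\<dots> = x" using a act_one by simp
  finally show ?thesis .
qed
lemma p_in: "y \<in> topspace Y \<Longrightarrow> p y \<in> topspace X"
  using psurj by blast
lemma peq': "s \<in> carrier G \<Longrightarrow> y \<in> topspace Y \<Longrightarrow> p (actY s y) = act s (p y)"
  using peq by blast

lemma orbit_act: assumes "s \<in> carrier G" "x \<in> topspace X"
  shows "act s x \<in> orbit_of G act x1 \<longleftrightarrow> x \<in> orbit_of G act x1"
proof
  assume "act s x \<in> orbit_of G act x1"
  then obtain g where g: "g \<in> carrier G" "act s x = act g x1" unfolding orbit_of_def by blast
  have "x = act (inv s) (act s x)" using act_inv assms by simp
  also have "\<dots> = act (inv s \<otimes> g) x1" using g act_mult x1X assms by simp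
  finally show "x \<in> orbit_of G act x1" unfolding orbit_of_def using g assms by blast
next
  assume "x \<in> orbit_of G act x1"
  then obtain g where g: "g \<in> carrier G" "x = act g x1" unfolding orbit_of_def by blast
  then have "act s x = act (s \<otimes> g) x1" using act_mult x1X assms by simp
  then show "act s x \<in> orbit_of G act x1" unfolding orbit_of_def using g assms by blast
qed

lemma more: "\<exists>x\<in>topspace X. x \<notin> orbit_of G act x1"
proof -
  obtain x y where xy: "x \<in> topspace X" "y \<in> topspace X" "y \<notin> orbit_of G act x" using more0 by blast
  show ?thesis
  proof (cases "x \<in> orbit_of G act x1")
    case False then show ?thesis using xy by blast
  next
    case True
    then obtain g where g: "g \<in> carrier G" "x = act g x1" unfolding orbit_of_def by blast
    have "y \<notin> orbit_of G act x1"
    proof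
      assume "y \<in> orbit_of G act x1"
      then obtain h where h: "h \<in> carrier G" "y = act h x1" unfolding orbit_of_def by blast
      have "act (h \<otimes> inv g) x = act h (act (inv g) x)" using act_mult h g xy by simp
      also have "act (inv g) x = x1" using g act_inv x1X by simp
      finally have "y = act (h \<otimes> inv g) x" using h by simp
      then have "y \<in> orbit_of G act x" unfolding orbit_of_def using h g by blast
      then show False using xy by blast
    qed
    then show ?thesis using xy by blast
  qed
qed

lemma x1_orbit: "x1 \<in> orbit_of G act x1"
  unfolding orbit_of_def using act_one x1X by force

lemma ft_pm: "y \<in> topspace Y \<Longrightarrow> ft y = 1 \<or> ft y = -1"
  using ftv by blast

lemma ft_eq_iff: "y \<in> topspace Y \<Longrightarrow> z \<in> topspace Y \<Longrightarrow> ft y = ft z \<longleftrightarrow> (ft y = 1 \<longleftrightarrow> ft z = 1)"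
  using ft_pm[of y] ft_pm[of z] by auto

lemma closed_ft_level: "s \<in> carrier G \<Longrightarrow> closedin Y {z \<in> topspace Y. ft (actY s z) = c}"
proof -
  assume s: "s \<in> carrier G"
  have "continuous_map Y euclideanreal (ft \<circ> actY s)"
    using continuous_map_compose[OF actY_cont[OF s] ftc] .
  from closedin_continuous_map_preimage[OF this, of "{c}"]
  show ?thesis by simp
qed

lemma open_ft_level: assumes "s \<in> carrier G" "c = 1 \<or> c = -1"
  shows "openin Y {z \<in> topspace Y. ft (actY s z) = c}"
proof -
  have eq: "{z \<in> topspace Y. ft (actY s z) = c} = topspace Y - {z \<in> topspace Y. ft (actY s z) = -c}"
    using assms ft_pm actY_in by force
  show ?thesis unfolding eq using closed_ft_level[OF assms(1)] by blast
qed

lemma open_ft_pat: assumes "finite T" "T \<subseteq> carrier G" "y \<in> topspace Y"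
  shows "openin Y {z \<in> topspace Y. \<forall>t\<in>T. ft (actY t z) = ft (actY t y)}"
proof -
  have eq: "{z \<in> topspace Y. \<forall>t\<in>T. ft (actY t z) = ft (actY t y)} =
     topspace Y \<inter> \<Inter>((\<lambda>t. {z \<in> topspace Y. ft (actY t z) = ft (actY t y)}) ` T)" by auto
  show ?thesis unfolding eq
    by (rule openin_Int_Inter) (use assms open_ft_level ft_pm actY_in in auto)
qed


lemma fibre_x1_differ:
  assumes y: "y \<in> topspace Y" "p y = x1" and z: "z \<in> topspace Y" "p z = x1" and yz: "y \<noteq> z"
  shows "ft y \<noteq> ft z"
proof
  assume eq: "ft y = ft z"
  obtain y1 y2 where y12: "y1 \<noteq> y2" "{w\<in>topspace Y. p w = x1} = {y1, y2}"
    using two x1X x1_orbit by blast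
  have fib: "w \<in> topspace Y \<Longrightarrow> p w = x1 \<Longrightarrow> ft w = ft y" for w
  proof -
    assume w: "w \<in> topspace Y" "p w = x1"
    have "w \<in> {y1,y2}" "y \<in> {y1,y2}" "z \<in> {y1,y2}" using w y z y12(2) by blast+
    then show "ft w = ft y" using eq yz by auto
  qed
  define g where "g = (\<lambda>x. if x = x1 then ft y else f x)"
  have q: "quotient_map Y X p"
    by (rule continuous_imp_quotient_map[OF pc cY hX psurj])
  have "continuous_map Y euclideanreal (g \<circ> p)"
  proof (rule continuous_map_eq[OF ftc])
    fix w assume w: "w \<in> topspace Y"
    show "ft w = (g \<circ> p) w"
    proof (cases "p w = x1")
      case True then show ?thesis using fib w g_def by simp
    next
      case False then show ?thesis using ftf w g_def by simp
    qed
  qed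
  then have gc: "continuous_map X euclideanreal g" by (rule continuous_compose_quotient_map[OF q])
  have "g ` topspace X \<subseteq> {1, -1}"
  proof
    fix v assume "v \<in> g ` topspace X"
    then obtain x where x: "x \<in> topspace X" "v = g x" by blast
    show "v \<in> {1, -1}"
    proof (cases "x = x1")
      case True then show ?thesis using x g_def ft_pm[OF y(1)] by auto
    next
      case False then show ?thesis using x g_def fval by auto
    qed
  qed
  moreover have "\<forall>x\<in>topspace X - {x1}. g x = f x" unfolding g_def by simp
  ultimately show False using noext gc by blast
qed

lemma sep_fibre:
  assumes y: "y \<in> topspace Y" and z: "z \<in> topspace Y" and pyz: "p y = p z" and yz: "y \<noteq> z"
  shows "\<exists>t\<in>carrier G. ft (actY t y) \<noteq> ft (actY t z)"
proof -
  have "p y \<in> orbit_of G act x1"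
  proof (rule ccontr)
    assume "p y \<notin> orbit_of G act x1"
    then have "\<exists>!w. w \<in> topspace Y \<and> p w = p y" using uniq p_in[OF y] by blast
    then show False using y z pyz yz by metis
  qed
  then obtain g where g: "g \<in> carrier G" "p y = act g x1" unfolding orbit_of_def by blast
  let ?t = "inv g"
  have t: "?t \<in> carrier G" using g by simp
  have py': "p (actY ?t y) = x1" using peq'[OF t y] g act_inv x1X by simp
  have pz': "p (actY ?t z) = x1" using peq'[OF t z] g pyz act_inv x1X by simp
  have "actY ?t y \<noteq> actY ?t z"
  proof
    assume "actY ?t y = actY ?t z"
    then have "actY (inv ?t) (actY ?t y) = actY (inv ?t) (actY ?t z)" by simp
    then show False using actY_inv[OF t y] actY_inv[OF t z] yz by simp
  qed
  then have "ft (actY ?t y) \<noteq> ft (actY ?t z)"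
    using fibre_x1_differ actY_in[OF t y] actY_in[OF t z] py' pz' by blast
  then show ?thesis using t by blast
qed

definition Dset where "Dset = {z \<in> topspace Y. p z \<notin> orbit_of G act x1}"

lemma Dset_inv: "s \<in> carrier G \<Longrightarrow> actY s ` Dset \<subseteq> Dset"
  unfolding Dset_def using actY_in peq' orbit_act p_in by auto

lemma Dset_dense: "Y closure_of Dset = topspace Y"
proof -
  have ne: "Dset \<noteq> {}"
  proof -
    obtain x where "x \<in> topspace X" "x \<notin> orbit_of G act x1" using more by blast
    then obtain y where "y \<in> topspace Y" "p y = x" using psurj by (metis imageE)
    then show ?thesis unfolding Dset_def using \<open>x \<notin> _\<close> by blast
  qed
  have "closedin Y (Y closure_of Dset)" by simp
  moreover have "Y closure_of Dset \<noteq> {}"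
    using ne closure_of_eq_empty[of Dset Y] unfolding Dset_def by blast
  moreover have "\<forall>s\<in>carrier G. \<forall>y\<in>Y closure_of Dset. actY s y \<in> Y closure_of Dset"
  proof (intro ballI)
    fix s y assume s: "s \<in> carrier G" and y: "y \<in> Y closure_of Dset"
    have "actY s ` (Y closure_of Dset) \<subseteq> Y closure_of (actY s ` Dset)"
      by (rule continuous_map_image_closure_subset[OF actY_cont[OF s]])
    also have "\<dots> \<subseteq> Y closure_of Dset" by (rule closure_of_mono[OF Dset_inv[OF s]])
    finally show "actY s y \<in> Y closure_of Dset" using y by blast
  qed
  ultimately show ?thesis using minY unfolding minimal_action_def by blast
qed

lemma dense_meet:
  assumes "openin Y W" "W \<noteq> {}"
  shows "\<exists>z\<in>W. p z \<notin> orbit_of G act x1"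
proof -
  have "W \<inter> Y closure_of Dset \<noteq> {}" using Dset_dense assms openin_subset by fastforce
  then have "W \<inter> Dset \<noteq> {}" using openin_Int_closure_of_eq_empty[OF assms(1)] by blast
  then show ?thesis unfolding Dset_def by blast
qed

end

context mc begin

lemma topY_ne: "topspace Y \<noteq> {}" using minY unfolding minimal_action_def by blast
lemma topX_ne: "topspace X \<noteq> {}" using topY_ne psurj by blast

lemma null_Y_imp_X:
  assumes nY: "null_action G Y actY" shows "null_action G X act"
  unfolding null_action_def
proof (intro allI impI)
  fix s :: "nat \<Rightarrow> 'g" and U :: "'a set set"
  assume a: "(\<forall>n. s n \<in> carrier G) \<and> finite U \<and> (\<forall>W\<in>U. openin X W) \<and> topspace X \<subseteq> \<Union>U"
  then have sG: "\<And>n. s n \<in> carrier G" and fU: "finite U" and oU: "\<And>W. W \<in> U \<Longrightarrow> openin X W"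
    and cU: "topspace X \<subseteq> \<Union>U" by auto
  define pre where "pre = (\<lambda>u. {y \<in> topspace Y. p y \<in> u})"
  define UY where "UY = pre ` U"
  have fUY: "finite UY" using fU unfolding UY_def by simp
  have oUY: "\<forall>W\<in>UY. openin Y W" unfolding UY_def pre_def
    using oU openin_continuous_map_preimage[OF pc] by blast
  have cUY: "topspace Y \<subseteq> \<Union>UY" unfolding UY_def pre_def using cU p_in by blast
  have limY: "limsup (\<lambda>n. ereal (ln (real (cover_number Y (join_cover Y actY s UY n))) / real n)) = 0"
    using nY sG fUY oUY cUY unfolding null_action_def by blast
  have actX: "\<And>i x. x \<in> topspace X \<Longrightarrow> act (s i) x \<in> topspace X" using act_in sG by blast
  have actYY: "\<And>i y. y \<in> topspace Y \<Longrightarrow> actY (s i) y \<in> topspace Y" using actY_in sG by blast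
  have le: "cover_number X (join_cover X act s U n) \<le> cover_number Y (join_cover Y actY s UY n)" for n
  proof -
    have "\<exists>V\<subseteq>join_cover Y actY s UY n. finite V \<and> card V = cover_number Y (join_cover Y actY s UY n) \<and> topspace Y \<subseteq> \<Union>V"
      by (rule cn_ex[OF join_cover_finite[OF fUY] join_cover_covers[where act=actY and s=s and n=n, OF cUY actYY]])
    then obtain V where V: "V \<subseteq> join_cover Y actY s UY n" "finite V"
        "card V = cover_number Y (join_cover Y actY s UY n)" "topspace Y \<subseteq> \<Union>V"
      by blast
    have ex: "\<exists>c\<in>join_cover X act s U n. v \<subseteq> pre c" if v: "v \<in> join_cover Y actY s UY n" for v
    proof -
      obtain WY where WY: "\<forall>i\<in>{1..n}. WY i \<in> UY" "v = topspace Y \<inter> (\<Inter>i\<in>{1..n}. preimg Y actY (s i) (WY i))"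
        using join_coverD[OF v] by blast
      define u where "u = (\<lambda>i. SOME u. u \<in> U \<and> WY i = pre u)"
      have u: "u i \<in> U \<and> WY i = pre (u i)" if "i \<in> {1..n}" for i
        unfolding u_def by (rule someI_ex) (use WY(1) that UY_def in blast)
      let ?c = "topspace X \<inter> (\<Inter>i\<in>{1..n}. preimg X act (s i) (u i))"
      have "?c \<in> join_cover X act s U n" by (rule join_coverI) (use u in blast)
      moreover have "v \<subseteq> pre ?c"
      proof
        fix y assume "y \<in> v"
        then have y: "y \<in> topspace Y" "\<And>i. i \<in> {1..n} \<Longrightarrow> actY (s i) y \<in> WY i"
          using WY(2) unfolding preimg_def by auto
        have "act (s i) (p y) \<in> u i" if i: "i \<in> {1..n}" for i
        proof -
          have "actY (s i) y \<in> pre (u i)" using y(2)[OF i] u[OF i] by simp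
          then have "p (actY (s i) y) \<in> u i" unfolding pre_def by simp
          then show ?thesis using peq'[OF sG y(1)] by simp
        qed
        then show "y \<in> pre ?c" unfolding pre_def preimg_def using y(1) p_in actX by auto
      qed
      ultimately show ?thesis by blast
    qed
    define \<phi> where "\<phi> = (\<lambda>v. SOME c. c \<in> join_cover X act s U n \<and> v \<subseteq> pre c)"
    have \<phi>: "\<phi> v \<in> join_cover X act s U n \<and> v \<subseteq> pre (\<phi> v)" if "v \<in> V" for v
      unfolding \<phi>_def by (rule someI_ex) (use ex V(1) that in blast)
    have "cover_number X (join_cover X act s U n) \<le> card (\<phi> ` V)"
    proof (rule cn_le)
      show "\<phi> ` V \<subseteq> join_cover X act s U n" using \<phi> by blast
      show "finite (\<phi> ` V)" using V(2) by simp
      show "topspace X \<subseteq> \<Union>(\<phi> ` V)"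
      proof
        fix x assume "x \<in> topspace X"
        then obtain y where y: "y \<in> topspace Y" "p y = x" using psurj by (metis imageE)
        then obtain v where "v \<in> V" "y \<in> v" using V(4) by blast
        then have "y \<in> pre (\<phi> v)" using \<phi> by blast
        then show "x \<in> \<Union>(\<phi> ` V)" using y \<open>v \<in> V\<close> unfolding pre_def by blast
      qed
    qed
    also have "\<dots> \<le> card V" using V(2) by (rule card_image_le)
    finally show ?thesis using V(3) by simp
  qed
  show "limsup (\<lambda>n. ereal (ln (real (cover_number X (join_cover X act s U n))) / real n)) = 0"
  proof (rule limsup_zero_le[OF _ _ limY])
    fix n
    have pos: "1 \<le> cover_number X (join_cover X act s U n)"
      by (rule cn_pos[OF topX_ne join_cover_finite[OF fU] join_cover_covers[where act=act and s=s, OF cU actX]])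
    then show "0 \<le> ln (real (cover_number X (join_cover X act s U n))) / real n" by simp
    show "ln (real (cover_number X (join_cover X act s U n))) / real n
        \<le> ln (real (cover_number Y (join_cover Y actY s UY n))) / real n"
      using pos le[of n] by (intro divide_right_mono) auto
  qed
qed

end

context mc begin

definition "Xp = {x \<in> topspace X - {x1}. f x = 1}"
definition "Xm = {x \<in> topspace X - {x1}. f x = -1}"
definition "Yp = {y \<in> topspace Y. ft y = 1}"
definition "Ym = {y \<in> topspace Y. ft y = -1}"

lemma Ypm_cover: "topspace Y \<subseteq> \<Union>{Yp, Ym}"
  unfolding Yp_def Ym_def using ft_pm by auto

lemma Ypm_open: "openin Y Yp" "openin Y Ym"
proof -
  have c: "closedin Y {y \<in> topspace Y. ft y \<in> {c}}" for c
    by (rule closedin_continuous_map_preimage[OF ftc]) simp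
  have "Yp = topspace Y - {y \<in> topspace Y. ft y \<in> {-1}}" unfolding Yp_def using ft_pm by force
  then show "openin Y Yp" using c[of "-1"] unfolding closedin_def by simp
  have "Ym = topspace Y - {y \<in> topspace Y. ft y \<in> {1}}" unfolding Ym_def using ft_pm by force
  then show "openin Y Ym" using c[of "1"] unfolding closedin_def by simp
qed

lemma indep_realize:
  assumes ind: "indep_set G X act Xp Xm M" and fM: "finite M" and neM: "M \<noteq> {}" and T: "T \<subseteq> M"
  shows "\<exists>y\<in>topspace Y. \<forall>g\<in>M. (ft (actY g y) = 1 \<longleftrightarrow> g \<in> T)"
proof -
  have MG: "M \<subseteq> carrier G" using ind unfolding indep_set_def by blast
  have h: "\<forall>F (\<omega>::'g\<Rightarrow>bool). F \<subseteq> M \<and> finite F \<and> F \<noteq> {} \<longrightarrow>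
        (\<Inter>s\<in>F. preimg X act s (if \<omega> s then Xp else Xm)) \<noteq> {}"
    using ind unfolding indep_set_def by blast
  have "(\<Inter>g\<in>M. preimg X act g (if g \<in> T then Xp else Xm)) \<noteq> {}"
    using h[rule_format, of M "\<lambda>g. g \<in> T"] fM neM by simp
  then obtain x where x: "\<And>g. g \<in> M \<Longrightarrow> x \<in> preimg X act g (if g \<in> T then Xp else Xm)" by blast
  obtain g0 where "g0 \<in> M" using neM by blast
  then have xX: "x \<in> topspace X" using x[of g0] unfolding preimg_def by blast
  obtain y where y: "y \<in> topspace Y" "p y = x" using psurj xX by (metis imageE)
  have "ft (actY g y) = 1 \<longleftrightarrow> g \<in> T" if g: "g \<in> M" for g
  proof -
    have gG: "g \<in> carrier G" using g MG by blast
    have ax: "act g x \<in> (if g \<in> T then Xp else Xm)" using x[OF g] unfolding preimg_def by blast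
    then have "act g x \<noteq> x1" unfolding Xp_def Xm_def by (auto split: if_splits)
    then have "ft (actY g y) = f (act g x)"
      using ftf actY_in[OF gG y(1)] peq'[OF gG y(1)] y(2) by simp
    then show ?thesis using ax unfolding Xp_def Xm_def by (auto split: if_splits)
  qed
  then show ?thesis using y by blast
qed

lemma indep_lower:
  assumes ind: "indep_set G X act Xp Xm M" and fM: "finite M" and neM: "M \<noteq> {}"
    and sG: "\<And>i. s i \<in> carrier G" and Ms: "M \<subseteq> s ` {1..n}"
  shows "2 ^ card M \<le> cover_number Y (join_cover Y actY s {Yp, Ym} n)"
proof -
  have actYY: "\<And>i y. y \<in> topspace Y \<Longrightarrow> actY (s i) y \<in> topspace Y" using actY_in sG by blast
  have "\<exists>V\<subseteq>join_cover Y actY s {Yp, Ym} n. finite V \<and> card V = cover_number Y (join_cover Y actY s {Yp, Ym} n) \<and> topspace Y \<subseteq> \<Union>V"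
    by (rule cn_ex[OF join_cover_finite join_cover_covers[where act=actY and s=s and n=n, OF Ypm_cover actYY]]) simp
  then obtain V where V: "V \<subseteq> join_cover Y actY s {Yp, Ym} n" "finite V"
      "card V = cover_number Y (join_cover Y actY s {Yp, Ym} n)" "topspace Y \<subseteq> \<Union>V"
    by blast
  define yT where "yT = (\<lambda>T. SOME y. y \<in> topspace Y \<and> (\<forall>g\<in>M. (ft (actY g y) = 1 \<longleftrightarrow> g \<in> T)))"
  have yT: "yT T \<in> topspace Y \<and> (\<forall>g\<in>M. (ft (actY g (yT T)) = 1 \<longleftrightarrow> g \<in> T))" if "T \<subseteq> M" for T
    unfolding yT_def by (rule someI_ex) (use indep_realize[OF ind fM neM that] in blast)
  define vT where "vT = (\<lambda>T. SOME v. v \<in> V \<and> yT T \<in> v)"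
  have vT: "vT T \<in> V \<and> yT T \<in> vT T" if "T \<subseteq> M" for T
    unfolding vT_def by (rule someI_ex) (use yT[OF that] V(4) in blast)
  have inj: "inj_on vT (Pow M)"
  proof (rule inj_onI)
    fix T T' assume T: "T \<in> Pow M" and T': "T' \<in> Pow M" and eq: "vT T = vT T'"
    have TM: "T \<subseteq> M" "T' \<subseteq> M" using T T' by auto
    obtain W where W: "\<forall>i\<in>{1..n}. W i \<in> {Yp, Ym}"
        "vT T = topspace Y \<inter> (\<Inter>i\<in>{1..n}. preimg Y actY (s i) (W i))"
    proof -
      have "vT T \<in> join_cover Y actY s {Yp, Ym} n" using vT[OF TM(1)] V(1) by blast
      from join_coverD[OF this] show ?thesis using that by blast
    qed
    have same: "g \<in> T \<longleftrightarrow> g \<in> T'" if g: "g \<in> M" for g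
    proof -
      obtain i where i: "i \<in> {1..n}" "g = s i" using Ms g by blast
      have a: "actY (s i) (yT T) \<in> W i" using vT[OF TM(1)] W(2) i(1) unfolding preimg_def by blast
      have b: "actY (s i) (yT T') \<in> W i" using vT[OF TM(2)] W(2) i(1) eq unfolding preimg_def by auto
      have "ft (actY g (yT T)) = 1 \<longleftrightarrow> ft (actY g (yT T')) = 1"
      proof (cases "W i = Yp")
        case True then show ?thesis using a b i(2) unfolding Yp_def by simp
      next
        case False then have "W i = Ym" using W(1) i(1) by blast
        then show ?thesis using a b i(2) unfolding Ym_def by simp
      qed
      then show ?thesis using yT[OF TM(1)] yT[OF TM(2)] g by blast
    qed
    show "T = T'" using same TM by blast
  qed
  have "card (Pow M) \<le> card V"
    by (rule card_inj_on_le[OF inj _ V(2)]) (use vT in blast)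
  then show ?thesis using card_Pow[OF fM] V(3) by simp
qed

end

lemma indep_subset:
  fixes G :: "('g,'m) monoid_scheme" and X :: "'a topology" and act :: "'g \<Rightarrow> 'a \<Rightarrow> 'a"
  assumes "indep_set G X act A B M" "M' \<subseteq> M" shows "indep_set G X act A B M'"
proof -
  have h: "\<forall>F (\<omega>::'g\<Rightarrow>bool). F \<subseteq> M \<and> finite F \<and> F \<noteq> {} \<longrightarrow>
        (\<Inter>s\<in>F. preimg X act s (if \<omega> s then A else B)) \<noteq> {}" and MG: "M \<subseteq> carrier G"
    using assms(1) unfolding indep_set_def by blast+
  show ?thesis unfolding indep_set_def
  proof (intro conjI allI impI)
    show "M' \<subseteq> carrier G" using MG assms(2) by blast
    fix F and \<omega> :: "'g \<Rightarrow> bool" assume "F \<subseteq> M' \<and> finite F \<and> F \<noteq> {}"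
    then show "(\<Inter>s\<in>F. preimg X act s (if \<omega> s then A else B)) \<noteq> {}"
      using h[rule_format, of F \<omega>] assms(2) by blast
  qed
qed

lemma blk_unique:
  fixes i j j' :: nat
  assumes "2^j \<le> i" "i < 2^(j+1)" "2^j' \<le> i" "i < 2^(j'+1)" shows "j' = j"
proof (rule ccontr)
  assume "j' \<noteq> j"
  then consider "j < j'" | "j' < j" by linarith
  then show False
  proof cases
    case 1
    then have "(2::nat)^(j+1) \<le> 2^j'" by (intro power_increasing) auto
    then show False using assms by linarith
  next
    case 2
    then have "(2::nat)^(j'+1) \<le> 2^j" by (intro power_increasing) auto
    then show False using assms by linarith
  qed
qed

context mc begin

lemma large_indep_not_null:
  assumes large: "arb_large_indep G X act Xp Xm" shows "\<not> null_action G Y actY"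
proof
  assume nY: "null_action G Y actY"
  have "\<forall>j. \<exists>M. finite M \<and> card M = 2^j \<and> indep_set G X act Xp Xm M"
  proof
    fix j :: nat
    obtain M0 where M0: "finite M0" "2^j \<le> card M0" "indep_set G X act Xp Xm M0"
      using large unfolding arb_large_indep_def by blast
    obtain M where "M \<subseteq> M0" "card M = 2^j" "finite M" using obtain_subset_with_card_n[OF M0(2)] by blast
    then show "\<exists>M. finite M \<and> card M = 2^j \<and> indep_set G X act Xp Xm M"
      using indep_subset[OF M0(3)] by blast
  qed
  then obtain Mf where Mf: "\<And>j. finite (Mf j) \<and> card (Mf j) = 2^j \<and> indep_set G X act Xp Xm (Mf j)"
    by metis
  have MfG: "Mf j \<subseteq> carrier G" for j using Mf[of j] unfolding indep_set_def by blast
  have "\<forall>j. \<exists>h. bij_betw h {0..<(2::nat)^j} (Mf j)"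
    using Mf ex_bij_betw_nat_finite by metis
  then obtain e where e: "\<And>j. bij_betw (e j) {0..<(2::nat)^j} (Mf j)" by metis
  have eimg: "e j ` {0..<(2::nat)^j} = Mf j" for j using e[of j] by (simp add: bij_betw_def)
  define blk where "blk = (\<lambda>i::nat. THE j. 2^j \<le> i \<and> i < 2^(j+1))"
  have blk_eq: "blk i = j" if "2^j \<le> i" "i < 2^(j+1)" for i j
    unfolding blk_def by (rule the_equality) (use that blk_unique in blast)+
  define s where "s = (\<lambda>i. if 1 \<le> i then e (blk i) (i - 2^(blk i)) else \<one>)"
  have sblk: "s i = e j (i - 2^j)" if "2^j \<le> i" "i < 2^(j+1)" for i j
  proof -
    have "1 \<le> i" using that(1) by (metis le_trans one_le_power one_le_numeral)
    then show ?thesis unfolding s_def using blk_eq[OF that] by simp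
  qed
  have sG: "s i \<in> carrier G" for i
  proof (cases "1 \<le> i")
    case True
    then obtain j where j: "2^j \<le> i" "i < 2^(j+1)" using ex_power_ivl1[of 2 i] by auto
    then have "i - 2^j < 2^j" by simp
    then have "e j (i - 2^j) \<in> Mf j" using eimg[of j] by auto
    then show ?thesis using sblk[OF j] MfG by auto
  next
    case False then show ?thesis unfolding s_def by simp
  qed
  have Ms: "Mf j \<subseteq> s ` {1..2^(j+1)}" for j
  proof
    fix g assume "g \<in> Mf j"
    then have "g \<in> e j ` {0..<(2::nat)^j}" using eimg[of j] by simp
    then obtain k where k: "k < 2^j" "g = e j k" by auto
    have "s (2^j + k) = g" using sblk[of j "2^j + k"] k by simp
    moreover have "2^j + k \<in> {1..2^(j+1)}" using k(1) by (simp add: one_le_power)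
    ultimately show "g \<in> s ` {1..2^(j+1)}" by (metis image_eqI)
  qed
  define N where "N = (\<lambda>n. cover_number Y (join_cover Y actY s {Yp, Ym} n))"
  have bound: "2 ^ (2^j) \<le> N (2^(j+1))" for j
  proof -
    have "Mf j \<noteq> {}" using Mf[of j] by (metis card.empty power_not_zero zero_neq_numeral)
    then show ?thesis using indep_lower[OF _ _ _ sG Ms[of j]] Mf[of j] unfolding N_def by simp
  qed
  have lim0: "limsup (\<lambda>n. ereal (ln (real (N n)) / real n)) = 0"
  proof -
    have pre: "(\<forall>n. s n \<in> carrier G) \<and> finite {Yp, Ym} \<and> (\<forall>W\<in>{Yp, Ym}. openin Y W) \<and> topspace Y \<subseteq> \<Union>{Yp, Ym}"
      using sG Ypm_open Ypm_cover by simp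
    show ?thesis using nY[unfolded null_action_def, rule_format, OF pre] unfolding N_def .
  qed
  define a where "a = (\<lambda>n. ereal (ln (real (N n)) / real n))"
  define r where "r = (\<lambda>j::nat. (2::nat)^(j+1))"
  have rmono: "strict_mono r" unfolding r_def by (rule strict_monoI) simp
  have ge: "ln 2 / 2 \<le> ln (real (N (r j))) / real (r j)" for j
  proof -
    have "(2::real) ^ (2^j) \<le> real (N (r j))" using bound[of j] unfolding r_def
      by (metis of_nat_le_iff of_nat_numeral of_nat_power)
    then have "ln ((2::real) ^ (2^j)) \<le> ln (real (N (r j)))" by (intro ln_mono) auto
    then have "2^j * ln 2 \<le> ln (real (N (r j)))" by (simp add: ln_realpow)
    moreover have "real (r j) = 2 * 2^j" unfolding r_def by simp
    ultimately show ?thesis by (simp add: field_simps)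
  qed
  have "ereal (ln 2 / 2) \<le> limsup (a \<circ> r)"
    by (rule le_Limsup) (use ge in \<open>auto simp: a_def\<close>)
  also have "\<dots> \<le> limsup a" by (rule limsup_subseq_mono[OF rmono])
  also have "\<dots> = 0" using lim0 unfolding a_def .
  finally have "ln (2::real) / 2 \<le> 0" by simp
  moreover have "0 < ln (2::real) / 2" by simp
  ultimately show False by linarith
qed

end

lemma compact_pointwise_cover:
  assumes "compactin Y K" "\<And>z. z \<in> K \<Longrightarrow> \<exists>N. openin Y N \<and> z \<in> N \<and> P N"
  shows "\<exists>\<F>. finite \<F> \<and> (\<forall>N\<in>\<F>. P N) \<and> K \<subseteq> \<Union>\<F>"
proof -
  let ?U = "{N. openin Y N \<and> P N}"
  have "(\<forall>U\<in>?U. openin Y U) \<and> K \<subseteq> \<Union>?U" using assms(2) by blast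
  then have "\<exists>\<F>. finite \<F> \<and> \<F> \<subseteq> ?U \<and> K \<subseteq> \<Union>\<F>"
    using assms(1) unfolding compactin_def by blast
  then show ?thesis by blast
qed

context mc begin

definition "patset T y = {z \<in> topspace Y. \<forall>t\<in>T. ft (actY t z) = ft (actY t y)}"

lemma sep_point:
  assumes y: "y \<in> topspace Y" and W: "openin Y W" "y \<in> W"
  shows "\<exists>A T. openin X A \<and> p y \<in> A \<and> finite T \<and> T \<subseteq> carrier G \<and>
     (\<forall>z\<in>topspace Y. p z \<in> A \<and> (\<forall>t\<in>T. ft (actY t z) = ft (actY t y)) \<longrightarrow> z \<in> W)"
proof -
  define good where "good = (\<lambda>N. \<exists>A T. openin X A \<and> p y \<in> A \<and> finite T \<and> T \<subseteq> carrier G \<and>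
     (\<forall>z\<in>topspace Y. p z \<in> A \<and> (\<forall>t\<in>T. ft (actY t z) = ft (actY t y)) \<longrightarrow> z \<notin> N))"
  let ?K = "topspace Y - W"
  have K: "compactin Y ?K" using closedin_compact_space[OF cY] W(1) by blast
  have loc: "\<exists>N. openin Y N \<and> z \<in> N \<and> good N" if z: "z \<in> ?K" for z
  proof (cases "p z = p y")
    case False
    have "p z \<in> topspace X" "p y \<in> topspace X" using z y p_in by auto
    then obtain U1 V1 where UV: "openin X U1" "openin X V1" "p z \<in> U1" "p y \<in> V1" "disjnt U1 V1"
      using hX False unfolding Hausdorff_space_def by blast
    define N where "N = {w \<in> topspace Y. p w \<in> U1}"
    have "openin Y N" unfolding N_def using openin_continuous_map_preimage[OF pc UV(1)] .
    moreover have "z \<in> N" unfolding N_def using z UV(3) by blast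
    moreover have "good N" unfolding good_def
    proof (intro exI conjI)
      show "openin X V1" "p y \<in> V1" "finite {}" "{} \<subseteq> carrier G" using UV by auto
      show "\<forall>w\<in>topspace Y. p w \<in> V1 \<and> (\<forall>t\<in>{}. ft (actY t w) = ft (actY t y)) \<longrightarrow> w \<notin> N"
        unfolding N_def using UV(5) unfolding disjnt_def by blast
    qed
    ultimately show ?thesis by blast
  next
    case True
    have "z \<noteq> y" using z W(2) by blast
    then obtain t where t: "t \<in> carrier G" "ft (actY t z) \<noteq> ft (actY t y)"
      using sep_fibre[of z y] z y True by auto
    define N where "N = {w \<in> topspace Y. ft (actY t w) = ft (actY t z)}"
    have "openin Y N" unfolding N_def
      by (rule open_ft_level[OF t(1)]) (use ft_pm actY_in[OF t(1)] z in blast)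
    moreover have "z \<in> N" unfolding N_def using z by blast
    moreover have "good N" unfolding good_def
    proof (intro exI conjI)
      show "openin X (topspace X)" "p y \<in> topspace X" "finite {t}" "{t} \<subseteq> carrier G"
        using y p_in t by auto
      show "\<forall>w\<in>topspace Y. p w \<in> topspace X \<and> (\<forall>t'\<in>{t}. ft (actY t' w) = ft (actY t' y)) \<longrightarrow> w \<notin> N"
        unfolding N_def using t(2) by auto
    qed
    ultimately show ?thesis by blast
  qed
  obtain \<F> where F: "finite \<F>" "\<forall>N\<in>\<F>. good N" "?K \<subseteq> \<Union>\<F>"
    using compact_pointwise_cover[OF K loc] by blast
  define Af where "Af = (\<lambda>N. SOME A. \<exists>T. openin X A \<and> p y \<in> A \<and> finite T \<and> T \<subseteq> carrier G \<and>
     (\<forall>z\<in>topspace Y. p z \<in> A \<and> (\<forall>t\<in>T. ft (actY t z) = ft (actY t y)) \<longrightarrow> z \<notin> N))"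
  define Tf where "Tf = (\<lambda>N. SOME T. openin X (Af N) \<and> p y \<in> Af N \<and> finite T \<and> T \<subseteq> carrier G \<and>
     (\<forall>z\<in>topspace Y. p z \<in> Af N \<and> (\<forall>t\<in>T. ft (actY t z) = ft (actY t y)) \<longrightarrow> z \<notin> N))"
  have AT: "openin X (Af N) \<and> p y \<in> Af N \<and> finite (Tf N) \<and> Tf N \<subseteq> carrier G \<and>
     (\<forall>z\<in>topspace Y. p z \<in> Af N \<and> (\<forall>t\<in>Tf N. ft (actY t z) = ft (actY t y)) \<longrightarrow> z \<notin> N)"
    if "N \<in> \<F>" for N
  proof -
    have "\<exists>A T. openin X A \<and> p y \<in> A \<and> finite T \<and> T \<subseteq> carrier G \<and>
     (\<forall>z\<in>topspace Y. p z \<in> A \<and> (\<forall>t\<in>T. ft (actY t z) = ft (actY t y)) \<longrightarrow> z \<notin> N)"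
      using F(2) that unfolding good_def by blast
    then have "\<exists>T. openin X (Af N) \<and> p y \<in> Af N \<and> finite T \<and> T \<subseteq> carrier G \<and>
     (\<forall>z\<in>topspace Y. p z \<in> Af N \<and> (\<forall>t\<in>T. ft (actY t z) = ft (actY t y)) \<longrightarrow> z \<notin> N)"
      unfolding Af_def by (rule someI_ex)
    then show ?thesis unfolding Tf_def by (rule someI_ex)
  qed
  define A where "A = topspace X \<inter> \<Inter>(Af ` \<F>)"
  define T where "T = \<Union>(Tf ` \<F>)"
  show ?thesis
  proof (intro exI conjI)
    show "openin X A" unfolding A_def by (rule openin_Int_Inter) (use F(1) AT in auto)
    show "p y \<in> A" unfolding A_def using AT p_in[OF y] by blast
    show "finite T" unfolding T_def using F(1) AT by blast
    show "T \<subseteq> carrier G" unfolding T_def using AT by blast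
    show "\<forall>z\<in>topspace Y. p z \<in> A \<and> (\<forall>t\<in>T. ft (actY t z) = ft (actY t y)) \<longrightarrow> z \<in> W"
    proof (intro ballI impI)
      fix z assume z: "z \<in> topspace Y" and h: "p z \<in> A \<and> (\<forall>t\<in>T. ft (actY t z) = ft (actY t y))"
      show "z \<in> W"
      proof (rule ccontr)
        assume "z \<notin> W"
        then obtain N where N: "N \<in> \<F>" "z \<in> N" using F(3) z by blast
        have "p z \<in> Af N" using h N(1) unfolding A_def by blast
        moreover have "\<forall>t\<in>Tf N. ft (actY t z) = ft (actY t y)" using h N(1) unfolding T_def by blast
        ultimately have "z \<notin> N" using AT[OF N(1)] z by blast
        then show False using N(2) by blast
      qed
    qed
  qed
qed

end

context mc begin

lemma refine:
  assumes fU: "finite U" and oU: "\<forall>W\<in>U. openin Y W" and cU: "topspace Y \<subseteq> \<Union>U"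
  shows "\<exists>T V. finite T \<and> T \<subseteq> carrier G \<and> finite V \<and> (\<forall>A\<in>V. openin X A) \<and> topspace X \<subseteq> \<Union>V \<and>
     (\<forall>A\<in>V. \<forall>y\<in>topspace Y. p y \<in> A \<longrightarrow>
        (\<exists>W\<in>U. \<forall>z\<in>topspace Y. p z \<in> A \<and> (\<forall>t\<in>T. ft (actY t z) = ft (actY t y)) \<longrightarrow> z \<in> W))"
proof -
  define Wf where "Wf = (\<lambda>y. SOME W. W \<in> U \<and> y \<in> W)"
  have Wf: "Wf y \<in> U \<and> y \<in> Wf y" if "y \<in> topspace Y" for y
    unfolding Wf_def by (rule someI_ex) (use cU that in blast)
  define Af where "Af = (\<lambda>y. SOME A. \<exists>T. openin X A \<and> p y \<in> A \<and> finite T \<and> T \<subseteq> carrier G \<and>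
     (\<forall>z\<in>topspace Y. p z \<in> A \<and> (\<forall>t\<in>T. ft (actY t z) = ft (actY t y)) \<longrightarrow> z \<in> Wf y))"
  define Tf where "Tf = (\<lambda>y. SOME T. openin X (Af y) \<and> p y \<in> Af y \<and> finite T \<and> T \<subseteq> carrier G \<and>
     (\<forall>z\<in>topspace Y. p z \<in> Af y \<and> (\<forall>t\<in>T. ft (actY t z) = ft (actY t y)) \<longrightarrow> z \<in> Wf y))"
  have AT: "openin X (Af y) \<and> p y \<in> Af y \<and> finite (Tf y) \<and> Tf y \<subseteq> carrier G \<and>
     (\<forall>z\<in>topspace Y. p z \<in> Af y \<and> (\<forall>t\<in>Tf y. ft (actY t z) = ft (actY t y)) \<longrightarrow> z \<in> Wf y)"
    if y: "y \<in> topspace Y" for y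
  proof -
    have "openin Y (Wf y)" using Wf[OF y] oU by blast
    then have "\<exists>A T. openin X A \<and> p y \<in> A \<and> finite T \<and> T \<subseteq> carrier G \<and>
     (\<forall>z\<in>topspace Y. p z \<in> A \<and> (\<forall>t\<in>T. ft (actY t z) = ft (actY t y)) \<longrightarrow> z \<in> Wf y)"
      using sep_point[OF y] Wf[OF y] by blast
    then have "\<exists>T. openin X (Af y) \<and> p y \<in> Af y \<and> finite T \<and> T \<subseteq> carrier G \<and>
     (\<forall>z\<in>topspace Y. p z \<in> Af y \<and> (\<forall>t\<in>T. ft (actY t z) = ft (actY t y)) \<longrightarrow> z \<in> Wf y)"
      unfolding Af_def by (rule someI_ex)
    then show ?thesis unfolding Tf_def by (rule someI_ex)
  qed
  define Q where "Q = (\<lambda>y. {z \<in> topspace Y. p z \<in> Af y \<and> (\<forall>t\<in>Tf y. ft (actY t z) = ft (actY t y))})"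
  have Qopen: "openin Y (Q y)" if y: "y \<in> topspace Y" for y
  proof -
    have "Q y = {z \<in> topspace Y. p z \<in> Af y} \<inter> patset (Tf y) y" unfolding Q_def patset_def by auto
    moreover have "openin Y {z \<in> topspace Y. p z \<in> Af y}"
      using openin_continuous_map_preimage[OF pc] AT[OF y] by blast
    moreover have "openin Y (patset (Tf y) y)" unfolding patset_def
      using open_ft_pat AT[OF y] y by blast
    ultimately show ?thesis by auto
  qed
  have yQ: "y \<in> Q y" if "y \<in> topspace Y" for y unfolding Q_def using AT[OF that] that by blast
  have "compactin Y (topspace Y)" using cY unfolding compact_space_def .
  then have "\<exists>\<F>. finite \<F> \<and> \<F> \<subseteq> Q ` topspace Y \<and> topspace Y \<subseteq> \<Union>\<F>"
  proof -
    have "(\<forall>W\<in>Q ` topspace Y. openin Y W) \<and> topspace Y \<subseteq> \<Union>(Q ` topspace Y)"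
      using Qopen yQ by blast
    then show ?thesis using \<open>compactin Y (topspace Y)\<close> unfolding compactin_def by blast
  qed
  then obtain \<F> where F: "finite \<F>" "\<F> \<subseteq> Q ` topspace Y" "topspace Y \<subseteq> \<Union>\<F>" by blast
  obtain Y0 where Y0: "Y0 \<subseteq> topspace Y" "finite Y0" "\<F> = Q ` Y0"
    using finite_subset_image[OF F(1) F(2)] by blast
  have Y0cov: "\<exists>y'\<in>Y0. w \<in> Q y'" if "w \<in> topspace Y" for w using F(3) Y0(3) that by blast
  define T where "T = \<Union>(Tf ` Y0)"
  have fT: "finite T" and TG: "T \<subseteq> carrier G" unfolding T_def using Y0 AT by blast+
  define Bad where "Bad = (\<lambda>x. topspace Y - \<Union>{patset T w | w. w \<in> topspace Y \<and> p w = x})"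
  have Bad_closed: "closedin Y (Bad x)" for x
  proof -
    have "openin Y (\<Union>{patset T w | w. w \<in> topspace Y \<and> p w = x})"
      unfolding patset_def using open_ft_pat[OF fT TG] by blast
    then show ?thesis unfolding Bad_def by (rule closedin_diff[OF closedin_topspace])
  qed
  have cm: "closed_map Y X p" by (rule continuous_imp_closed_map[OF pc cY hX])
  have pBad_closed: "closedin X (p ` Bad x)" for x using cm Bad_closed unfolding closed_map_def by blast
  define fam where "fam = (\<lambda>x. {Af y | y. y \<in> Y0 \<and> (\<exists>w\<in>topspace Y. p w = x \<and> w \<in> Q y)})"
  define B where "B = (\<lambda>x. (topspace X - p ` Bad x) \<inter> \<Inter>(fam x))"
  have Bopen: "openin X (B x)" for x
  proof -
    have "fam x \<subseteq> Af ` Y0" unfolding fam_def by blast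
    then have "finite (fam x)" using Y0(2) finite_subset by blast
    moreover have "\<And>A. A \<in> fam x \<Longrightarrow> openin X A" unfolding fam_def using AT Y0(1) by blast
    moreover have "openin X (topspace X - p ` Bad x)" using pBad_closed[of x] by (simp add: openin_diff)
    ultimately show ?thesis unfolding B_def by (intro openin_Int_Inter)
  qed
  have xB: "x \<in> B x" if x: "x \<in> topspace X" for x
  proof -
    have "x \<notin> p ` Bad x"
    proof
      assume "x \<in> p ` Bad x"
      then obtain z where z: "z \<in> Bad x" "p z = x" by blast
      then have "z \<in> topspace Y" unfolding Bad_def by blast
      then have "z \<in> patset T z" unfolding patset_def by blast
      then show False using z \<open>z \<in> topspace Y\<close> unfolding Bad_def by blast
    qed
    moreover have "x \<in> A" if "A \<in> fam x" for A
      using that AT Y0(1) unfolding fam_def Q_def by blast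
    ultimately show ?thesis unfolding B_def using x by blast
  qed
  have "compactin X (topspace X)" using cX unfolding compact_space_def .
  then have "\<exists>\<V>. finite \<V> \<and> \<V> \<subseteq> B ` topspace X \<and> topspace X \<subseteq> \<Union>\<V>"
  proof -
    have "(\<forall>W\<in>B ` topspace X. openin X W) \<and> topspace X \<subseteq> \<Union>(B ` topspace X)"
      using Bopen xB by blast
    then show ?thesis using \<open>compactin X (topspace X)\<close> unfolding compactin_def by blast
  qed
  then obtain V where V: "finite V" "V \<subseteq> B ` topspace X" "topspace X \<subseteq> \<Union>V" by blast
  have R: "\<exists>W\<in>U. \<forall>z\<in>topspace Y. p z \<in> A \<and> (\<forall>t\<in>T. ft (actY t z) = ft (actY t y)) \<longrightarrow> z \<in> W"
    if A: "A \<in> V" and y: "y \<in> topspace Y" and pyA: "p y \<in> A" for A y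
  proof -
    obtain x0 where x0: "x0 \<in> topspace X" "A = B x0" using V(2) A by blast
    have "p y \<notin> p ` Bad x0" using pyA x0(2) unfolding B_def by blast
    then have "y \<notin> Bad x0" by blast
    then obtain w where w: "w \<in> topspace Y" "p w = x0" "y \<in> patset T w" unfolding Bad_def using y by blast
    obtain y' where y': "y' \<in> Y0" "w \<in> Q y'" using Y0cov[OF w(1)] by blast
    have y'Y: "y' \<in> topspace Y" using y' Y0(1) by blast
    have Afam: "Af y' \<in> fam x0" unfolding fam_def using y' w by blast
    show ?thesis
    proof (intro bexI[of _ "Wf y'"] ballI impI)
      show "Wf y' \<in> U" using Wf[OF y'Y] by blast
      fix z assume z: "z \<in> topspace Y" and h: "p z \<in> A \<and> (\<forall>t\<in>T. ft (actY t z) = ft (actY t y))"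
      have "p z \<in> Af y'" using h x0(2) Afam unfolding B_def by blast
      moreover have "\<forall>t\<in>Tf y'. ft (actY t z) = ft (actY t y')"
      proof
        fix t assume t: "t \<in> Tf y'"
        then have tT: "t \<in> T" unfolding T_def using y'(1) by blast
        have "ft (actY t z) = ft (actY t y)" using h tT by blast
        also have "\<dots> = ft (actY t w)" using w(3) tT unfolding patset_def by blast
        also have "\<dots> = ft (actY t y')" using y'(2) t unfolding Q_def by blast
        finally show "ft (actY t z) = ft (actY t y')" .
      qed
      ultimately show "z \<in> Wf y'" using AT[OF y'Y] z by blast
    qed
  qed
  show ?thesis
  proof (intro exI conjI)
    show "finite T" "T \<subseteq> carrier G" "finite V" "topspace X \<subseteq> \<Union>V" using fT TG V by auto
    show "\<forall>A\<in>V. openin X A" using V(2) Bopen by blast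
    show "\<forall>A\<in>V. \<forall>y\<in>topspace Y. p y \<in> A \<longrightarrow>
        (\<exists>W\<in>U. \<forall>z\<in>topspace Y. p z \<in> A \<and> (\<forall>t\<in>T. ft (actY t z) = ft (actY t y)) \<longrightarrow> z \<in> W)"
      using R by blast
  qed
qed

end

context mc begin

definition "pat S y = {g \<in> S. ft (actY g y) = 1}"

lemma shat_indep:
  assumes fS: "finite S" and SG: "S \<subseteq> carrier G" and F: "F \<in> shat (pat S ` topspace Y) S"
  shows "indep_set G X act Xp Xm F"
  unfolding indep_set_def
proof (intro conjI allI impI)
  have FS: "F \<subseteq> S" using shatS[OF F] .
  then show FG: "F \<subseteq> carrier G" using SG by blast
  have fF: "finite F" using FS fS finite_subset by blast
  fix F0 and \<omega> :: "'g \<Rightarrow> bool" assume F0: "F0 \<subseteq> F \<and> finite F0 \<and> F0 \<noteq> {}"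
  have "{g \<in> F. \<omega> g} \<subseteq> F" by blast
  from shatD[OF F this] obtain \<pi> where \<pi>: "\<pi> \<in> pat S ` topspace Y" "\<pi> \<inter> F = {g \<in> F. \<omega> g}" by blast
  then obtain y where y: "y \<in> topspace Y" "\<pi> = pat S y" by blast
  have yw: "ft (actY g y) = 1 \<longleftrightarrow> \<omega> g" if "g \<in> F" for g
    using \<pi>(2) y(2) that FS unfolding pat_def by blast
  have "openin Y (patset F y)" unfolding patset_def by (rule open_ft_pat[OF fF FG y(1)])
  moreover have "y \<in> patset F y" unfolding patset_def using y(1) by blast
  ultimately obtain z where z: "z \<in> patset F y" "p z \<notin> orbit_of G act x1" using dense_meet by blast
  have zY: "z \<in> topspace Y" using z(1) unfolding patset_def by blast
  have "p z \<in> (\<Inter>g\<in>F0. preimg X act g (if \<omega> g then Xp else Xm))"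
  proof
    fix g assume g0: "g \<in> F0"
    then have g: "g \<in> F" using F0 by blast
    have gG: "g \<in> carrier G" using g FG by blast
    have pz: "p (actY g z) = act g (p z)" using peq'[OF gG zY] .
    have "act g (p z) \<notin> orbit_of G act x1" using orbit_act[OF gG p_in[OF zY]] z(2) by blast
    then have ne: "act g (p z) \<noteq> x1" using x1_orbit by blast
    have fz: "ft (actY g z) = f (act g (p z))" using ftf actY_in[OF gG zY] pz ne by simp
    have eq: "ft (actY g z) = ft (actY g y)" using z(1) g unfolding patset_def by blast
    have inX: "act g (p z) \<in> topspace X" using act_in[OF gG p_in[OF zY]] .
    have "act g (p z) \<in> (if \<omega> g then Xp else Xm)"
    proof (cases "\<omega> g")
      case True
      then have "ft (actY g y) = 1" using yw g by blast
      then show ?thesis using True fz eq ne inX unfolding Xp_def by simp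
    next
      case False
      then have "ft (actY g y) \<noteq> 1" using yw g by blast
      then have "ft (actY g y) = -1" using ft_pm actY_in[OF gG y(1)] by blast
      then show ?thesis using False fz eq ne inX unfolding Xm_def by simp
    qed
    then show "p z \<in> preimg X act g (if \<omega> g then Xp else Xm)"
      unfolding preimg_def using p_in[OF zY] by blast
  qed
  then show "(\<Inter>g\<in>F0. preimg X act g (if \<omega> g then Xp else Xm)) \<noteq> {}" by blast
qed

lemma pattern_count:
  assumes fS: "finite S" and SG: "S \<subseteq> carrier G"
    and d: "\<And>M. finite M \<Longrightarrow> indep_set G X act Xp Xm M \<Longrightarrow> card M < d"
  shows "card (pat S ` topspace Y) \<le> (d+1) * (card S + 1) ^ d"
proof -
  have "card (pat S ` topspace Y) \<le> card (shat (pat S ` topspace Y) S)"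
    by (rule pajor[OF fS]) (auto simp: pat_def)
  also have "\<dots> \<le> card {F. F \<subseteq> S \<and> card F < d}"
  proof (rule card_mono)
    show "finite {F. F \<subseteq> S \<and> card F < d}" using fS by simp
    show "shat (pat S ` topspace Y) S \<subseteq> {F. F \<subseteq> S \<and> card F < d}"
    proof
      fix F assume F: "F \<in> shat (pat S ` topspace Y) S"
      have FS: "F \<subseteq> S" using shatS[OF F] .
      then have "finite F" using fS finite_subset by blast
      then have "card F < d" using d shat_indep[OF fS SG F] by blast
      then show "F \<in> {F. F \<subseteq> S \<and> card F < d}" using FS by blast
    qed
  qed
  also have "\<dots> \<le> (d+1) * (card S + 1) ^ d" by (rule card_small_subsets[OF fS])
  finally show ?thesis .
qed

end

context mc begin

lemma cover_bound:
  assumes cU: "topspace Y \<subseteq> \<Union>U"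
    and fT: "finite T" and TG: "T \<subseteq> carrier G" and fV: "finite V" and cV: "topspace X \<subseteq> \<Union>V"
    and R: "\<forall>A\<in>V. \<forall>y\<in>topspace Y. p y \<in> A \<longrightarrow>
        (\<exists>W\<in>U. \<forall>z\<in>topspace Y. p z \<in> A \<and> (\<forall>t\<in>T. ft (actY t z) = ft (actY t y)) \<longrightarrow> z \<in> W)"
    and sG: "\<And>i. s i \<in> carrier G"
    and d: "\<And>M. finite M \<Longrightarrow> indep_set G X act Xp Xm M \<Longrightarrow> card M < d"
  shows "cover_number Y (join_cover Y actY s U n) \<le>
           cover_number X (join_cover X act s V n) * ((d+1) * (card T * n + 1) ^ d)"
proof -
  define S where "S = (\<lambda>(t,i). t \<otimes> s i) ` (T \<times> {1..n})"
  have fS: "finite S" unfolding S_def using fT by simp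
  have SG: "S \<subseteq> carrier G" unfolding S_def using TG sG by auto
  have cS: "card S \<le> card T * n"
  proof -
    have "card S \<le> card (T \<times> {1..n})" unfolding S_def by (rule card_image_le) (use fT in simp)
    also have "\<dots> = card T * n" by (simp add: card_cartesian_product)
    finally show ?thesis .
  qed
  define P where "P = pat S ` topspace Y"
  have cP: "card P \<le> (d+1) * (card T * n + 1) ^ d"
  proof -
    have "card P \<le> (d+1) * (card S + 1) ^ d" unfolding P_def by (rule pattern_count[OF fS SG d])
    also have "\<dots> \<le> (d+1) * (card T * n + 1) ^ d"
      by (intro mult_le_mono2 power_mono) (use cS in auto)
    finally show ?thesis .
  qed
  have fP: "finite P" unfolding P_def
    by (rule finite_subset[of _ "Pow S"]) (auto simp: pat_def fS)
  have actX: "\<And>i x. x \<in> topspace X \<Longrightarrow> act (s i) x \<in> topspace X" using act_in sG by blast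
  have "\<exists>C\<subseteq>join_cover X act s V n. finite C \<and> card C = cover_number X (join_cover X act s V n) \<and> topspace X \<subseteq> \<Union>C"
    by (rule cn_ex[OF join_cover_finite[OF fV] join_cover_covers[where act=act and s=s and n=n, OF cV actX]])
  then obtain C where C: "C \<subseteq> join_cover X act s V n" "finite C"
      "card C = cover_number X (join_cover X act s V n)" "topspace X \<subseteq> \<Union>C" by blast
  define Ac where "Ac = (\<lambda>c. SOME A. (\<forall>i\<in>{1..n}. A i \<in> V) \<and> c = topspace X \<inter> (\<Inter>i\<in>{1..n}. preimg X act (s i) (A i)))"
  have Ac: "(\<forall>i\<in>{1..n}. Ac c i \<in> V) \<and> c = topspace X \<inter> (\<Inter>i\<in>{1..n}. preimg X act (s i) (Ac c i))"
    if "c \<in> C" for c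
  proof -
    have "c \<in> join_cover X act s V n" using that C(1) by blast
    from join_coverD[OF this] show ?thesis unfolding Ac_def by (rule someI_ex)
  qed
  have Acmem: "act (s i) x \<in> Ac c i" if "c \<in> C" "x \<in> c" "i \<in> {1..n}" for c x i
  proof -
    have "x \<in> preimg X act (s i) (Ac c i)" using Ac[OF that(1)] that(2,3) by blast
    then show ?thesis unfolding preimg_def by blast
  qed
  define Qs where "Qs = {q \<in> C \<times> P. \<exists>y\<in>topspace Y. p y \<in> fst q \<and> pat S y = snd q}"
  define y0 where "y0 = (\<lambda>q. SOME y. y \<in> topspace Y \<and> p y \<in> fst q \<and> pat S y = snd q)"
  have y0: "y0 q \<in> topspace Y \<and> p (y0 q) \<in> fst q \<and> pat S (y0 q) = snd q" if "q \<in> Qs" for q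
    unfolding y0_def by (rule someI_ex) (use that Qs_def in blast)
  define Wi where "Wi = (\<lambda>q i. SOME W. W \<in> U \<and> (\<forall>z\<in>topspace Y. p z \<in> Ac (fst q) i \<and>
        (\<forall>t\<in>T. ft (actY t z) = ft (actY t (actY (s i) (y0 q)))) \<longrightarrow> z \<in> W))"
  have Wi: "Wi q i \<in> U \<and> (\<forall>z\<in>topspace Y. p z \<in> Ac (fst q) i \<and>
        (\<forall>t\<in>T. ft (actY t z) = ft (actY t (actY (s i) (y0 q)))) \<longrightarrow> z \<in> Wi q i)"
    if q: "q \<in> Qs" and i: "i \<in> {1..n}" for q i
  proof -
    have cC: "fst q \<in> C" using q unfolding Qs_def by auto
    have AV: "Ac (fst q) i \<in> V" using Ac[OF cC] i by blast
    have yY: "actY (s i) (y0 q) \<in> topspace Y" using actY_in[OF sG] y0[OF q] by blast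
    have "p (actY (s i) (y0 q)) = act (s i) (p (y0 q))" using peq'[OF sG] y0[OF q] by blast
    also have "\<dots> \<in> Ac (fst q) i" using Acmem[OF cC _ i] y0[OF q] by blast
    finally have "p (actY (s i) (y0 q)) \<in> Ac (fst q) i" .
    then have "\<exists>W\<in>U. \<forall>z\<in>topspace Y. p z \<in> Ac (fst q) i \<and>
        (\<forall>t\<in>T. ft (actY t z) = ft (actY t (actY (s i) (y0 q)))) \<longrightarrow> z \<in> W"
      using R AV yY by blast
    then have ex: "\<exists>W. W \<in> U \<and> (\<forall>z\<in>topspace Y. p z \<in> Ac (fst q) i \<and>
        (\<forall>t\<in>T. ft (actY t z) = ft (actY t (actY (s i) (y0 q)))) \<longrightarrow> z \<in> W)" by blast
    show ?thesis unfolding Wi_def using someI_ex[OF ex] .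
  qed
  have "Qs \<subseteq> C \<times> P" unfolding Qs_def by blast
  then have fQs: "finite Qs" using C(2) fP finite_subset by blast
  define J where "J = (\<lambda>q. topspace Y \<inter> (\<Inter>i\<in>{1..n}. preimg Y actY (s i) (Wi q i)))"
  have "cover_number Y (join_cover Y actY s U n) \<le> card (J ` Qs)"
  proof (rule cn_le)
    show "J ` Qs \<subseteq> join_cover Y actY s U n"
    proof
      fix v assume "v \<in> J ` Qs"
      then obtain q where q: "q \<in> Qs" "v = J q" by blast
      show "v \<in> join_cover Y actY s U n" unfolding q(2) J_def
        by (rule join_coverI) (use Wi[OF q(1)] in blast)
    qed
    show "finite (J ` Qs)" using fQs by simp
    show "topspace Y \<subseteq> \<Union>(J ` Qs)"
    proof
      fix y assume y: "y \<in> topspace Y"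
      obtain c where c: "c \<in> C" "p y \<in> c" using C(4) p_in[OF y] by blast
      define q where "q = (c, pat S y)"
      have q: "q \<in> Qs" unfolding Qs_def q_def P_def using c y by auto
      have "y \<in> J q" unfolding J_def
      proof (intro IntI InterI)
        show "y \<in> topspace Y" by (rule y)
        fix Z assume "Z \<in> (\<lambda>i. preimg Y actY (s i) (Wi q i)) ` {1..n}"
        then obtain i where i: "i \<in> {1..n}" "Z = preimg Y actY (s i) (Wi q i)" by blast
        let ?z = "actY (s i) y"
        have zY: "?z \<in> topspace Y" using actY_in[OF sG y] .
        have pz: "p ?z \<in> Ac (fst q) i" using peq'[OF sG y] Acmem[OF c(1) c(2) i(1)] unfolding q_def by simp
        have pt: "ft (actY t ?z) = ft (actY t (actY (s i) (y0 q)))" if t: "t \<in> T" for t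
        proof -
          have tG: "t \<in> carrier G" using t TG by blast
          have gS: "t \<otimes> s i \<in> S" unfolding S_def using t i(1) by force
          have y0Y: "y0 q \<in> topspace Y" using y0[OF q] by blast
          have pp: "pat S (y0 q) = pat S y" using y0[OF q] unfolding q_def by simp
          have e1: "actY t ?z = actY (t \<otimes> s i) y" using actY_mult[OF tG sG y] by simp
          have e2: "actY t (actY (s i) (y0 q)) = actY (t \<otimes> s i) (y0 q)" using actY_mult[OF tG sG y0Y] by simp
          have "ft (actY (t \<otimes> s i) y) = 1 \<longleftrightarrow> ft (actY (t \<otimes> s i) (y0 q)) = 1"
            using pp gS unfolding pat_def by blast
          then have "ft (actY (t \<otimes> s i) y) = ft (actY (t \<otimes> s i) (y0 q))"
            using ft_eq_iff actY_in[OF _ y] actY_in[OF _ y0Y] SG gS by blast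
          then show ?thesis using e1 e2 by simp
        qed
        have "?z \<in> Wi q i" using Wi[OF q i(1)] zY pz pt by blast
        then show "y \<in> Z" unfolding i(2) preimg_def using y by blast
      qed
      then show "y \<in> \<Union>(J ` Qs)" using q by blast
    qed
  qed
  also have "\<dots> \<le> card Qs" by (rule card_image_le[OF fQs])
  also have "\<dots> \<le> card (C \<times> P)" by (rule card_mono) (use C(2) fP Qs_def in auto)
  also have "\<dots> = card C * card P" by (rule card_cartesian_product)
  also have "\<dots> \<le> card C * ((d+1) * (card T * n + 1) ^ d)" by (rule mult_le_mono2[OF cP])
  finally show ?thesis using C(3) by simp
qed

end

lemma ln_lim: "(\<lambda>n. ln (real n + 1) / real n) \<longlonglongrightarrow> 0"
  by real_asymp

lemma h_lim: "(\<lambda>n. (c0 + d * ln (real n + 1)) / real n) \<longlonglongrightarrow> (0::real)"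
proof -
  have a: "(\<lambda>n. c0 / real n) \<longlonglongrightarrow> 0" by (rule lim_const_over_n)
  have b: "(\<lambda>n. d * (ln (real n + 1) / real n)) \<longlonglongrightarrow> d * 0" by (rule tendsto_mult[OF tendsto_const ln_lim])
  have "(\<lambda>n. c0 / real n + d * (ln (real n + 1) / real n)) \<longlonglongrightarrow> 0 + d * 0"
    by (rule tendsto_add[OF a b])
  moreover have "(\<lambda>n. c0 / real n + d * (ln (real n + 1) / real n)) = (\<lambda>n. (c0 + d * ln (real n + 1)) / real n)"
    by (rule ext) (simp add: add_divide_distrib)
  ultimately show ?thesis by simp
qed

lemma ln_bound:
  fixes NY NX cT d n :: nat
  assumes "1 \<le> NY" "1 \<le> NX" "NY \<le> NX * ((d+1) * (cT * n + 1) ^ d)"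
  shows "ln (real NY) / real n \<le> ln (real NX) / real n +
     (ln (real d + 1) + real d * ln (real cT + 1) + real d * ln (real n + 1)) / real n"
proof -
  have p1: "0 < real cT * real n + 1" by (intro add_nonneg_pos mult_nonneg_nonneg) auto
  have "real NY \<le> real (NX * ((d+1) * (cT * n + 1) ^ d))"
    using assms(3) by (simp only: of_nat_le_iff)
  also have "\<dots> = real NX * ((real d + 1) * (real cT * real n + 1) ^ d)" by (simp add: algebra_simps)
  finally have "real NY \<le> real NX * ((real d + 1) * (real cT * real n + 1) ^ d)" .
  then have "ln (real NY) \<le> ln (real NX * ((real d + 1) * (real cT * real n + 1) ^ d))"
    using assms(1) by (intro ln_mono) auto
  also have "\<dots> = ln (real NX) + ln (real d + 1) + real d * ln (real cT * real n + 1)"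
  proof -
    have p2: "0 < real NX" using assms(2) by simp
    have p3: "0 < (real cT * real n + 1) ^ d" using p1 by simp
    have p4: "(0::real) < real d + 1" by simp
    have "ln (real NX * ((real d + 1) * (real cT * real n + 1) ^ d)) =
          ln (real NX) + ln ((real d + 1) * (real cT * real n + 1) ^ d)"
      using p2 p3 p4 by (intro ln_mult_pos) auto
    also have "\<dots> = ln (real NX) + (ln (real d + 1) + ln ((real cT * real n + 1) ^ d))"
      using p3 p4 by (subst ln_mult_pos) auto
    also have "\<dots> = ln (real NX) + ln (real d + 1) + real d * ln (real cT * real n + 1)"
      by (simp add: ln_realpow)
    finally show ?thesis .
  qed
  also have "\<dots> \<le> ln (real NX) + ln (real d + 1) + real d * (ln (real cT + 1) + ln (real n + 1))"
  proof -
    have "real cT * real n + 1 \<le> (real cT + 1) * (real n + 1)" by (simp add: algebra_simps)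
    then have "ln (real cT * real n + 1) \<le> ln ((real cT + 1) * (real n + 1))" using p1 by (intro ln_mono) auto
    also have "\<dots> = ln (real cT + 1) + ln (real n + 1)" by (simp add: ln_mult)
    finally show ?thesis by (intro add_left_mono mult_left_mono) auto
  qed
  finally have "ln (real NY) \<le> ln (real NX) + (ln (real d + 1) + real d * ln (real cT + 1) + real d * ln (real n + 1))"
    by (simp add: algebra_simps)
  then have "ln (real NY) / real n \<le> (ln (real NX) + (ln (real d + 1) + real d * ln (real cT + 1) + real d * ln (real n + 1))) / real n"
    by (intro divide_right_mono) auto
  then show ?thesis by (simp add: add_divide_distrib)
qed

context mc begin

lemma null_bounded_imp_null_Y:
  assumes nX: "null_action G X act" and nl: "\<not> arb_large_indep G X act Xp Xm"
  shows "null_action G Y actY"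
  unfolding null_action_def
proof (intro allI impI)
  fix s :: "nat \<Rightarrow> 'g" and U :: "'b set set"
  assume a: "(\<forall>n. s n \<in> carrier G) \<and> finite U \<and> (\<forall>W\<in>U. openin Y W) \<and> topspace Y \<subseteq> \<Union>U"
  then have sG: "\<And>n. s n \<in> carrier G" and fU: "finite U" and oU: "\<forall>W\<in>U. openin Y W"
    and cU: "topspace Y \<subseteq> \<Union>U" by auto
  obtain d where d0: "\<forall>M. \<not> (finite M \<and> d \<le> card M \<and> indep_set G X act Xp Xm M)"
    using nl unfolding arb_large_indep_def by blast
  have d: "\<And>M. finite M \<Longrightarrow> indep_set G X act Xp Xm M \<Longrightarrow> card M < d"
    using d0 not_le by blast
  obtain T V where TV: "finite T" "T \<subseteq> carrier G" "finite V" "\<forall>A\<in>V. openin X A" "topspace X \<subseteq> \<Union>V"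
     "\<forall>A\<in>V. \<forall>y\<in>topspace Y. p y \<in> A \<longrightarrow>
        (\<exists>W\<in>U. \<forall>z\<in>topspace Y. p z \<in> A \<and> (\<forall>t\<in>T. ft (actY t z) = ft (actY t y)) \<longrightarrow> z \<in> W)"
    using refine[OF fU oU cU] by (elim exE conjE) (rule that; assumption)
  define NX where "NX = (\<lambda>n. cover_number X (join_cover X act s V n))"
  define NY where "NY = (\<lambda>n. cover_number Y (join_cover Y actY s U n))"
  have limX: "limsup (\<lambda>n. ereal (ln (real (NX n)) / real n)) = 0"
  proof -
    have pre: "(\<forall>n. s n \<in> carrier G) \<and> finite V \<and> (\<forall>W\<in>V. openin X W) \<and> topspace X \<subseteq> \<Union>V"
      using sG TV by simp
    show ?thesis using nX[unfolded null_action_def, rule_format, OF pre] unfolding NX_def .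
  qed
  have actX: "\<And>i x. x \<in> topspace X \<Longrightarrow> act (s i) x \<in> topspace X" using act_in sG by blast
  have actYY: "\<And>i y. y \<in> topspace Y \<Longrightarrow> actY (s i) y \<in> topspace Y" using actY_in sG by blast
  have NX1: "1 \<le> NX n" for n unfolding NX_def
    by (rule cn_pos[OF topX_ne join_cover_finite[OF TV(3)] join_cover_covers[where act=act and s=s, OF TV(5) actX]])
  have NY1: "1 \<le> NY n" for n unfolding NY_def
    by (rule cn_pos[OF topY_ne join_cover_finite[OF fU] join_cover_covers[where act=actY and s=s, OF cU actYY]])
  have NYb: "NY n \<le> NX n * ((d+1) * (card T * n + 1) ^ d)" for n
    unfolding NX_def NY_def by (rule cover_bound[OF cU TV(1,2,3,5,6) sG d])
  define h where "h = (\<lambda>n. (ln (real d + 1) + real d * ln (real (card T) + 1) + real d * ln (real n + 1)) / real n)"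
  have ineq: "ln (real (NY n)) / real n \<le> ln (real (NX n)) / real n + h n" for n
    unfolding h_def by (rule ln_bound[OF NY1 NX1 NYb])
  have hlim: "h \<longlonglongrightarrow> 0" unfolding h_def by (rule h_lim)
  have limh: "limsup (\<lambda>n. ereal (h n)) = 0"
    using lim_imp_Limsup[OF trivial_limit_sequentially tendsto_ereal[OF hlim]] by simp
  have le: "limsup (\<lambda>n. ereal (ln (real (NY n)) / real n)) \<le> 0"
  proof -
    have "limsup (\<lambda>n. ereal (ln (real (NY n)) / real n))
          \<le> limsup (\<lambda>n. ereal (ln (real (NX n)) / real n) + ereal (h n))"
      by (rule Limsup_mono) (use ineq in auto)
    also have "\<dots> \<le> limsup (\<lambda>n. ereal (ln (real (NX n)) / real n)) + limsup (\<lambda>n. ereal (h n))"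
      by (rule ereal_limsup_add_mono)
    also have "\<dots> = 0" using limX limh by simp
    finally show ?thesis .
  qed
  have ge: "0 \<le> limsup (\<lambda>n. ereal (ln (real (NY n)) / real n))"
    by (rule limsup_ge0) (use NY1 in simp)
  have "limsup (\<lambda>n. ereal (ln (real (NY n)) / real n)) = 0" using le ge by (rule antisym)
  then show "limsup (\<lambda>n. ereal (ln (real (cover_number Y (join_cover Y actY s U n))) / real n)) = 0"
    unfolding NY_def .
qed

end

theorem proposition3p1:
  fixes G :: "('g,'m) monoid_scheme" and X :: "'a topology" and act :: "'g \<Rightarrow> 'a \<Rightarrow> 'a"
    and x1 :: 'a and f :: "'a \<Rightarrow> real"
    and Y :: "'b topology" and actY :: "'g \<Rightarrow> 'b \<Rightarrow> 'b" and p :: "'b \<Rightarrow> 'a"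
  assumes "group G" and "countable (carrier G)" and "infinite (carrier G)"
    and "compact_space X" and "metrizable_space X"
    and "cont_action G X act" and "minimal_action G X act"
    and "\<exists>x\<in>topspace X. \<exists>y\<in>topspace X. y \<notin> orbit_of G act x"
    and "x1 \<in> topspace X"
    and "\<forall>s\<in>carrier G. act s x1 = x1 \<longrightarrow> s = \<one>\<^bsub>G\<^esub>"
    and "continuous_map (subtopology X (topspace X - {x1})) euclideanreal f"
    and "f ` (topspace X - {x1}) \<subseteq> {1, -1}"
    and "\<not> (\<exists>g. continuous_map X euclideanreal g \<and> g ` topspace X \<subseteq> {1, -1} \<and>
                (\<forall>x\<in>topspace X - {x1}. g x = f x))"
    and "mcmahon_extension G X act x1 f Y actY p"
  shows "null_action G Y actY \<longleftrightarrow>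
           (null_action G X act \<and>
            \<not> arb_large_indep G X act {x \<in> topspace X - {x1}. f x = 1} {x \<in> topspace X - {x1}. f x = -1})"
proof -
  note mce = assms(14)[unfolded mcmahon_extension_def]
  note mcY = mce[THEN conjunct1]
  note mmY = mce[THEN conjunct2, THEN conjunct1]
  note maY = mce[THEN conjunct2, THEN conjunct2, THEN conjunct1]
  note mminY = mce[THEN conjunct2, THEN conjunct2, THEN conjunct2, THEN conjunct1]
  note mpc = mce[THEN conjunct2, THEN conjunct2, THEN conjunct2, THEN conjunct2, THEN conjunct1]
  note mps = mce[THEN conjunct2, THEN conjunct2, THEN conjunct2, THEN conjunct2, THEN conjunct2, THEN conjunct1]
  note mpeq = mce[THEN conjunct2, THEN conjunct2, THEN conjunct2, THEN conjunct2, THEN conjunct2, THEN conjunct2, THEN conjunct1]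
  note muniq = mce[THEN conjunct2, THEN conjunct2, THEN conjunct2, THEN conjunct2, THEN conjunct2, THEN conjunct2, THEN conjunct2, THEN conjunct1]
  note mtwo = mce[THEN conjunct2, THEN conjunct2, THEN conjunct2, THEN conjunct2, THEN conjunct2, THEN conjunct2, THEN conjunct2, THEN conjunct2, THEN conjunct1]
  note mft = mce[THEN conjunct2, THEN conjunct2, THEN conjunct2, THEN conjunct2, THEN conjunct2, THEN conjunct2, THEN conjunct2, THEN conjunct2, THEN conjunct2]
  obtain ft where ft: "continuous_map Y euclideanreal ft" "ft ` topspace Y \<subseteq> {1, -1}"
      "\<forall>y\<in>topspace Y. p y \<noteq> x1 \<longrightarrow> ft y = f (p y)"
    using mft by (elim exE conjE) (rule that; assumption)
  have hX: "Hausdorff_space X" using assms(5) by (rule metrizable_imp_Hausdorff_space)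
  have mc: "mc G X act x1 f Y actY p ft"
  proof (intro mc.intro mc_axioms.intro)
    show "group G" by (rule assms(1))
    show "compact_space X" by (rule assms(4))
    show "Hausdorff_space X" by (rule hX)
    show "cont_action G X act" by (rule assms(6))
    show "cont_action G Y actY" by (rule maY)
    show "minimal_action G Y actY" by (rule mminY)
    show "compact_space Y" by (rule mcY)
    show "x1 \<in> topspace X" by (rule assms(9))
    show "\<exists>x\<in>topspace X. \<exists>y\<in>topspace X. y \<notin> orbit_of G act x" by (rule assms(8))
    show "continuous_map (subtopology X (topspace X - {x1})) euclideanreal f" by (rule assms(11))
    show "f ` (topspace X - {x1}) \<subseteq> {1, -1}" by (rule assms(12))
    show "\<not> (\<exists>g. continuous_map X euclideanreal g \<and> g ` topspace X \<subseteq> {1, -1} \<and>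
                (\<forall>x\<in>topspace X - {x1}. g x = f x))" by (rule assms(13))
    show "\<forall>x\<in>topspace X - orbit_of G act x1. \<exists>!y. y \<in> topspace Y \<and> p y = x" by (rule muniq)
    show "continuous_map Y X p" by (rule mpc)
    show "p ` topspace Y = topspace X" by (rule mps)
    show "\<forall>s\<in>carrier G. \<forall>y\<in>topspace Y. p (actY s y) = act s (p y)" by (rule mpeq)
    show "\<forall>x\<in>topspace X \<inter> orbit_of G act x1. \<exists>y1 y2. y1 \<noteq> y2 \<and> {y\<in>topspace Y. p y = x} = {y1, y2}"
      by (rule mtwo)
    show "continuous_map Y euclideanreal ft" by (rule ft(1))
    show "ft ` topspace Y \<subseteq> {1, -1}" by (rule ft(2))
    show "\<forall>y\<in>topspace Y. p y \<noteq> x1 \<longrightarrow> ft y = f (p y)" by (rule ft(3))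
  qed
  interpret M: mc G X act x1 f Y actY p ft by (rule mc)
  have XpXm: "M.Xp = {x \<in> topspace X - {x1}. f x = 1}" "M.Xm = {x \<in> topspace X - {x1}. f x = -1}"
    by (rule M.Xp_def, rule M.Xm_def)
  show ?thesis
  proof
    assume nY: "null_action G Y actY"
    have a: "null_action G X act" by (rule M.null_Y_imp_X[OF nY])
    have b: "\<not> arb_large_indep G X act M.Xp M.Xm" using M.large_indep_not_null nY by blast
    show "null_action G X act \<and>
            \<not> arb_large_indep G X act {x \<in> topspace X - {x1}. f x = 1} {x \<in> topspace X - {x1}. f x = -1}"
      using a b unfolding XpXm by blast
  next
    assume h: "null_action G X act \<and>
            \<not> arb_large_indep G X act {x \<in> topspace X - {x1}. f x = 1} {x \<in> topspace X - {x1}. f x = -1}"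
    then have "null_action G X act" "\<not> arb_large_indep G X act M.Xp M.Xm" unfolding XpXm by blast+
    then show "null_action G Y actY" by (rule M.null_bounded_imp_null_Y)
  qed
qed

end
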